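(* Let $R$ be a commutative ring such that every semi-compact $R$-module is pure-injective. Then every prime ideal of $R$ is maximal.
   Context: An $R$-module $M$ is semi-compact if every finitely solvable system of congruences $x\equiv x_\alpha \pmod{M[I_\alpha]}$ ($\alpha\in\Lambda$, $x_\alpha\in M$, $I_\alpha$ an ideal, $M[I_\alpha]=\{m\in M: I_\alpha m=0\}$) has a simultaneous solution in $M$. A module is pure-injective if it is injective relative to all pure exact sequences (those remaining exact under tensoring with every module). *)

theory Defs
  imports "HOL-Algebra.Module" "HOL-Algebra.Ideal"
begin

definition ann_sub :: "'a ring \<Rightarrow> ('a, 'b, 'c) module_scheme \<Rightarrow> 'a set \<Rightarrow> 'b set" where
  "ann_sub R M I = {m \<in> carrier M. \<forall>r\<in>I. r \<odot>\<^bsub>M\<^esub> m = \<zero>\<^bsub>M\<^esub>}"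

text \<open>Semi-compact: every finitely solvable system of congruences
  x = x_alpha (mod M[I_alpha]) has a simultaneous solution.  A system is
  given as the set S of its pairs (x_alpha, I_alpha).\<close>
definition semi_compact :: "'a ring \<Rightarrow> ('a, 'b, 'c) module_scheme \<Rightarrow> bool" where
  "semi_compact R M \<longleftrightarrow>
     (\<forall>S. S \<subseteq> {(y, I). y \<in> carrier M \<and> ideal I R} \<longrightarrow>
        (\<forall>F. F \<subseteq> S \<and> finite F \<longrightarrow>
             (\<exists>x\<in>carrier M. \<forall>(y, I)\<in>F. x \<ominus>\<^bsub>M\<^esub> y \<in> ann_sub R M I)) \<longrightarrow>
        (\<exists>x\<in>carrier M. \<forall>(y, I)\<in>S. x \<ominus>\<^bsub>M\<^esub> y \<in> ann_sub R M I))"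

definition mod_lin :: "'a ring \<Rightarrow> ('a, 'b, 'c) module_scheme \<Rightarrow> ('a, 'd, 'e) module_scheme
    \<Rightarrow> ('b \<Rightarrow> 'd) \<Rightarrow> bool" where
  "mod_lin R A B h \<longleftrightarrow> h \<in> carrier A \<rightarrow> carrier B \<and>
     (\<forall>x\<in>carrier A. \<forall>y\<in>carrier A. h (x \<oplus>\<^bsub>A\<^esub> y) = h x \<oplus>\<^bsub>B\<^esub> h y) \<and>
     (\<forall>r\<in>carrier R. \<forall>x\<in>carrier A. h (r \<odot>\<^bsub>A\<^esub> x) = r \<odot>\<^bsub>B\<^esub> h x)"

text \<open>Tensor products A (x) N, presented as finite formal R-linear combinations
  of pairs (a, n) modulo the submodule of bilinearity relations.\<close>
definition formal_sums :: "'a ring \<Rightarrow> ('a, 'b, 'c) module_scheme \<Rightarrow> ('a, 'd, 'e) module_scheme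
    \<Rightarrow> ('b \<times> 'd \<Rightarrow> 'a) set" where
  "formal_sums R A N = {c. (\<forall>p. c p \<in> carrier R) \<and> finite {p. c p \<noteq> \<zero>\<^bsub>R\<^esub>} \<and>
       {p. c p \<noteq> \<zero>\<^bsub>R\<^esub>} \<subseteq> carrier A \<times> carrier N}"

definition delta :: "'a ring \<Rightarrow> 'p \<Rightarrow> 'p \<Rightarrow> 'a" where
  "delta R q = (\<lambda>p. if p = q then \<one>\<^bsub>R\<^esub> else \<zero>\<^bsub>R\<^esub>)"

definition fs_add :: "'a ring \<Rightarrow> ('p \<Rightarrow> 'a) \<Rightarrow> ('p \<Rightarrow> 'a) \<Rightarrow> 'p \<Rightarrow> 'a" where
  "fs_add R c d = (\<lambda>p. c p \<oplus>\<^bsub>R\<^esub> d p)"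

definition fs_sub :: "'a ring \<Rightarrow> ('p \<Rightarrow> 'a) \<Rightarrow> ('p \<Rightarrow> 'a) \<Rightarrow> 'p \<Rightarrow> 'a" where
  "fs_sub R c d = (\<lambda>p. c p \<ominus>\<^bsub>R\<^esub> d p)"

definition fs_smult :: "'a ring \<Rightarrow> 'a \<Rightarrow> ('p \<Rightarrow> 'a) \<Rightarrow> 'p \<Rightarrow> 'a" where
  "fs_smult R r c = (\<lambda>p. r \<otimes>\<^bsub>R\<^esub> c p)"

inductive_set tensor_rel :: "'a ring \<Rightarrow> ('a, 'b, 'c) module_scheme \<Rightarrow> ('a, 'd, 'e) module_scheme
    \<Rightarrow> ('b \<times> 'd \<Rightarrow> 'a) set"
  for R A N where
  zero: "(\<lambda>p. \<zero>\<^bsub>R\<^esub>) \<in> tensor_rel R A N"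
| add: "c \<in> tensor_rel R A N \<Longrightarrow> d \<in> tensor_rel R A N \<Longrightarrow> fs_add R c d \<in> tensor_rel R A N"
| smult: "r \<in> carrier R \<Longrightarrow> c \<in> tensor_rel R A N \<Longrightarrow> fs_smult R r c \<in> tensor_rel R A N"
| lin1: "a \<in> carrier A \<Longrightarrow> a' \<in> carrier A \<Longrightarrow> n \<in> carrier N \<Longrightarrow>
     fs_sub R (fs_sub R (delta R (a \<oplus>\<^bsub>A\<^esub> a', n)) (delta R (a, n))) (delta R (a', n)) \<in> tensor_rel R A N"
| lin2: "a \<in> carrier A \<Longrightarrow> n \<in> carrier N \<Longrightarrow> n' \<in> carrier N \<Longrightarrow>
     fs_sub R (fs_sub R (delta R (a, n \<oplus>\<^bsub>N\<^esub> n')) (delta R (a, n))) (delta R (a, n')) \<in> tensor_rel R A N"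
| lin3: "r \<in> carrier R \<Longrightarrow> a \<in> carrier A \<Longrightarrow> n \<in> carrier N \<Longrightarrow>
     fs_sub R (delta R (r \<odot>\<^bsub>A\<^esub> a, n)) (fs_smult R r (delta R (a, n))) \<in> tensor_rel R A N"
| lin4: "r \<in> carrier R \<Longrightarrow> a \<in> carrier A \<Longrightarrow> n \<in> carrier N \<Longrightarrow>
     fs_sub R (delta R (a, r \<odot>\<^bsub>N\<^esub> n)) (fs_smult R r (delta R (a, n))) \<in> tensor_rel R A N"

text \<open>The map f (x) N on formal sums.\<close>
definition tmap :: "'a ring \<Rightarrow> ('a, 'b, 'c) module_scheme \<Rightarrow> ('b \<Rightarrow> 'x)
    \<Rightarrow> ('b \<times> 'd \<Rightarrow> 'a) \<Rightarrow> ('x \<times> 'd \<Rightarrow> 'a)" where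
  "tmap R A f c = (\<lambda>(b, n). finsum R (\<lambda>a. c (a, n)) {a. a \<in> carrier A \<and> f a = b \<and> c (a, n) \<noteq> \<zero>\<^bsub>R\<^esub>})"

text \<open>Pure exact sequence 0 -> A -f-> B -g-> C -> 0: exact, and remains exact
  after tensoring with every module N (of the same carrier type).\<close>
definition pure_exact :: "'a ring \<Rightarrow> ('a, 'b) module \<Rightarrow> ('b \<Rightarrow> 'b) \<Rightarrow> ('a, 'b) module
    \<Rightarrow> ('b \<Rightarrow> 'b) \<Rightarrow> ('a, 'b) module \<Rightarrow> bool" where
  "pure_exact R A f B g C \<longleftrightarrow>
     module R A \<and> module R B \<and> module R C \<and> mod_lin R A B f \<and> mod_lin R B C g \<and>
     inj_on f (carrier A) \<and> g ` carrier B = carrier C \<and>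
     {b \<in> carrier B. g b = \<zero>\<^bsub>C\<^esub>} = f ` carrier A \<and>
     (\<forall>N :: ('a, 'b) module. module R N \<longrightarrow>
        (\<forall>c\<in>formal_sums R A N. tmap R A f c \<in> tensor_rel R B N \<longrightarrow> c \<in> tensor_rel R A N) \<and>
        (\<forall>c\<in>formal_sums R B N. tmap R B g c \<in> tensor_rel R C N \<longrightarrow>
            (\<exists>d\<in>formal_sums R A N. fs_sub R c (tmap R A f d) \<in> tensor_rel R B N)) \<and>
        (\<forall>c\<in>formal_sums R C N.
            (\<exists>d\<in>formal_sums R B N. fs_sub R c (tmap R B g d) \<in> tensor_rel R C N)))"

definition pure_injective :: "'a ring \<Rightarrow> ('a, 'b) module \<Rightarrow> bool" where
  "pure_injective R M \<longleftrightarrow>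
     (\<forall>(A :: ('a, 'b) module) f B g C. pure_exact R A f B g C \<longrightarrow>
        (\<forall>h. mod_lin R A M h \<longrightarrow> (\<exists>k. mod_lin R B M k \<and> (\<forall>a\<in>carrier A. k (f a) = h a))))"

end

theory Submission
  imports Defs
begin


definition supp :: "'a ring \<Rightarrow> ('p \<Rightarrow> 'a) \<Rightarrow> 'p set" where
  "supp R c = {p. c p \<noteq> \<zero>\<^bsub>R\<^esub>}"

lemma fs_add_apply: "fs_add R c d p = c p \<oplus>\<^bsub>R\<^esub> d p" by (simp add: fs_add_def)
lemma fs_sub_apply: "fs_sub R c d p = c p \<ominus>\<^bsub>R\<^esub> d p" by (simp add: fs_sub_def)
lemma fs_smult_apply: "fs_smult R r c p = r \<otimes>\<^bsub>R\<^esub> c p" by (simp add: fs_smult_def)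
lemmas fs_simps = fs_add_apply fs_sub_apply fs_smult_apply
lemma delta_apply: "delta R q p = (if p = q then \<one>\<^bsub>R\<^esub> else \<zero>\<^bsub>R\<^esub>)" by (simp add: delta_def)

lemma FS_iff: "c \<in> formal_sums R A N \<longleftrightarrow>
   (\<forall>p. c p \<in> carrier R) \<and> finite (supp R c) \<and> supp R c \<subseteq> carrier A \<times> carrier N"
  by (simp add: formal_sums_def supp_def)

locale cr = cring R for R :: "'a ring" (structure)
context cr begin

lemma FS_closed: "c \<in> formal_sums R A N \<Longrightarrow> c p \<in> carrier R"
  by (cases p) (simp add: FS_iff)

lemma FS_out: "c \<in> formal_sums R A N \<Longrightarrow> p \<notin> supp R c \<Longrightarrow> c p = \<zero>"
  by (simp add: supp_def)

lemma FS_zero: "(\<lambda>p. \<zero>) \<in> formal_sums R A N"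
  by (simp add: FS_iff supp_def)

lemma FS_add: assumes "c \<in> formal_sums R A N" "d \<in> formal_sums R A N"
  shows "fs_add R c d \<in> formal_sums R A N"
proof -
  have "supp R (fs_add R c d) \<subseteq> supp R c \<union> supp R d"
    using assms by (auto simp: supp_def FS_iff fs_simps)
  then show ?thesis using assms unfolding FS_iff
    by (auto intro: finite_subset simp: fs_simps)
qed

lemma FS_smult: assumes "r \<in> carrier R" "c \<in> formal_sums R A N"
  shows "fs_smult R r c \<in> formal_sums R A N"
proof -
  have "supp R (fs_smult R r c) \<subseteq> supp R c"
    using assms by (auto simp: supp_def FS_iff fs_simps)
  then show ?thesis using assms unfolding FS_iff
    by (auto intro: finite_subset simp: fs_simps)
qed

lemma FS_sub: assumes "c \<in> formal_sums R A N" "d \<in> formal_sums R A N"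
  shows "fs_sub R c d \<in> formal_sums R A N"
proof -
  have "supp R (fs_sub R c d) \<subseteq> supp R c \<union> supp R d"
    using assms by (auto simp: supp_def FS_iff a_minus_def fs_simps)
  then show ?thesis using assms unfolding FS_iff
    by (auto intro: finite_subset simp: fs_simps)
qed

lemma FS_delta: assumes "a \<in> carrier A" "n \<in> carrier N"
  shows "delta R (a, n) \<in> formal_sums R A N"
proof -
  have "supp R (delta R (a,n)) \<subseteq> {(a,n)}"
    by (auto simp: supp_def delta_def)
  then show ?thesis using assms unfolding FS_iff
    by (auto intro: finite_subset simp: delta_def)
qed

lemma rel_FS:
  assumes A: "module R A" and N: "module R N" and x: "x \<in> tensor_rel R A N"
  shows "x \<in> formal_sums R A N"
proof -
  interpret A: module R A by (rule A)
  interpret N: module R N by (rule N)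
  show ?thesis using x
  proof (induction rule: tensor_rel.induct)
    case zero then show ?case by (rule FS_zero)
  next
    case (add c d) then show ?case by (intro FS_add add.IH)
  next
    case (smult r c) then show ?case by (intro FS_smult smult.IH smult.hyps)
  next
    case (lin1 a a' n) then show ?case
      by (intro FS_sub FS_delta) auto
  next
    case (lin2 a n n') then show ?case
      by (intro FS_sub FS_delta) auto
  next
    case (lin3 r a n) then show ?case
      by (intro FS_sub FS_delta FS_smult) auto
  next
    case (lin4 r a n) then show ?case
      by (intro FS_sub FS_delta FS_smult) auto
  qed
qed

lemma tmap_eq:
  assumes c: "c \<in> formal_sums R A N" and S: "finite S" "fst ` supp R c \<subseteq> S" "S \<subseteq> carrier A"
  shows "tmap R A h c (b, n) = (\<Oplus>a\<in>{a\<in>S. h a = b}. c (a, n))"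
proof -
  have sub: "{a. a \<in> carrier A \<and> h a = b \<and> c (a, n) \<noteq> \<zero>} \<subseteq> {a\<in>S. h a = b}"
    using S(2) by (force simp: supp_def)
  show ?thesis unfolding tmap_def
    apply simp
    apply (rule add.finprod_mono_neutral_cong_left)
    using S sub c by (auto simp: FS_closed)
qed

lemma tmap_FS:
  fixes B :: "('a, 'x, 'y) module_scheme"
  assumes c: "c \<in> formal_sums R A N" and h: "h \<in> carrier A \<rightarrow> carrier B"
  shows "tmap R A h c \<in> formal_sums R B N"
proof -
  let ?S = "fst ` supp R c"
  have fin: "finite ?S" "?S \<subseteq> carrier A" using c by (auto simp: FS_iff)
  have cl: "\<And>p. tmap R A h c p \<in> carrier R"
    by (auto simp: tmap_eq[OF c fin(1) _ fin(2)] intro!: finsum_closed FS_closed[OF c])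
  have "supp R (tmap R A h c) \<subseteq> (\<lambda>(a, n). (h a, n)) ` supp R c"
  proof
    fix p assume p: "p \<in> supp R (tmap R A h c)"
    obtain b n where pe: "p = (b, n)" by (cases p)
    have "{a. a \<in> carrier A \<and> h a = b \<and> c (a, n) \<noteq> \<zero>} \<noteq> {}"
    proof
      assume "{a. a \<in> carrier A \<and> h a = b \<and> c (a, n) \<noteq> \<zero>} = {}"
      then have "tmap R A h c p = \<zero>" using pe by (simp add: tmap_def del: Collect_empty_eq)
      with p show False by (simp add: supp_def)
    qed
    then obtain a where a: "a \<in> carrier A" "h a = b" "c (a, n) \<noteq> \<zero>" by blast
    then show "p \<in> (\<lambda>(a, n). (h a, n)) ` supp R c"
      using pe by (force simp: supp_def)
  qed
  moreover have "(\<lambda>(a, n). (h a, n)) ` supp R c \<subseteq> carrier B \<times> carrier N"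
    using c h by (auto simp: FS_iff)
  moreover have "finite ((\<lambda>(a, n). (h a, n)) ` supp R c)"
    using c by (simp add: FS_iff)
  ultimately show ?thesis using cl unfolding FS_iff by (auto intro: finite_subset simp: fs_simps)
qed


lemma supp_add: "supp R (fs_add R c d) \<subseteq> supp R c \<union> supp R d"
  by (auto simp: supp_def fs_simps)

lemma tmap_add:
  assumes c: "c \<in> formal_sums R A N" and d: "d \<in> formal_sums R A N"
  shows "tmap R A h (fs_add R c d) = fs_add R (tmap R A h c) (tmap R A h d)"
proof -
  have "tmap R A h (fs_add R c d) p = fs_add R (tmap R A h c) (tmap R A h d) p" if pe: "p = (b, n)" for p b n
  proof -
  let ?S = "fst ` supp R c \<union> fst ` supp R d"
  have fin: "finite ?S" "?S \<subseteq> carrier A" using c d by (auto simp: FS_iff)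
  have cd: "fs_add R c d \<in> formal_sums R A N" by (rule FS_add[OF c d])
  have "fst ` supp R (fs_add R c d) \<subseteq> ?S" using supp_add[of c d] by auto
  then show ?thesis
    using pe fin
    by (simp add: tmap_eq[OF cd fin(1) _ fin(2)] tmap_eq[OF c fin(1) _ fin(2)]
        tmap_eq[OF d fin(1) _ fin(2)] finsum_addf FS_closed[OF c] FS_closed[OF d] Pi_def fs_simps)
  qed
  then show ?thesis by (auto simp: fun_eq_iff)
qed

lemma tmap_smult:
  assumes c: "c \<in> formal_sums R A N" and r: "r \<in> carrier R"
  shows "tmap R A h (fs_smult R r c) = fs_smult R r (tmap R A h c)"
proof -
  have "tmap R A h (fs_smult R r c) p = fs_smult R r (tmap R A h c) p" if pe: "p = (b, n)" for p b n
  proof -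
  let ?S = "fst ` supp R c"
  have fin: "finite ?S" "?S \<subseteq> carrier A" using c by (auto simp: FS_iff)
  have cd: "fs_smult R r c \<in> formal_sums R A N" by (rule FS_smult[OF r c])
  have "fst ` supp R (fs_smult R r c) \<subseteq> ?S"
  proof
    fix x assume "x \<in> fst ` supp R (fs_smult R r c)"
    then obtain y where "r \<otimes> c (x, y) \<noteq> \<zero>" by (auto simp: supp_def fs_simps)
    then have "c (x, y) \<noteq> \<zero>" using r by auto
    then show "x \<in> ?S" by (force simp: supp_def)
  qed
  then show ?thesis
    using pe fin
    by (simp add: tmap_eq[OF cd fin(1) _ fin(2)] tmap_eq[OF c fin(1) _ fin(2)]
        finsum_rdistr r FS_closed[OF c] Pi_def fs_simps)
  qed
  then show ?thesis by (auto simp: fun_eq_iff)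
qed

lemma tmap_zero: "tmap R A h (\<lambda>p. \<zero>) = (\<lambda>p. \<zero>)"
  by (auto simp: tmap_def)

lemma tmap_delta:
  fixes N :: "('a, 'n, 'e) module_scheme"
  assumes a: "a \<in> carrier A" and n: "n \<in> carrier N"
  shows "tmap R A h (delta R (a, n)) = delta R (h a, n)"
proof -
  have "tmap R A h (delta R (a, n)) p = delta R (h a, n) p" if pe: "p = (b, m)" for p b m
  proof -
  have dd: "delta R (a, n) \<in> formal_sums R A N" by (rule FS_delta[OF a n])
  have s: "fst ` supp R (delta R (a, n)) \<subseteq> {a}" by (auto simp: supp_def delta_def)
  have te: "tmap R A h (delta R (a,n)) (b,m) = (\<Oplus>x\<in>{x\<in>{a}. h x = b}. delta R (a,n) (x,m))"
    by (rule tmap_eq[OF dd]) (use s a in auto)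
  show ?thesis
  proof (cases "h a = b")
    case True
    then have "{x \<in> {a}. h x = b} = {a}" by auto
    then show ?thesis using pe True a te
      by (simp add: delta_def)
  next
    case False
    then have "{x \<in> {a}. h x = b} = {}" by auto
    then show ?thesis using pe False a te
      by (simp add: delta_def del: Collect_empty_eq)
  qed
  qed
  then show ?thesis by (auto simp: fun_eq_iff)
qed

lemma fs_sub_eq:
  fixes N :: "('a, 'n, 'e) module_scheme" and N' :: "('a, 'n, 'e2) module_scheme"
  assumes c: "c \<in> formal_sums R A N" and d: "d \<in> formal_sums R A' N'"
  shows "fs_sub R c d = fs_add R c (fs_smult R (\<ominus> \<one>) d)"
  by (rule ext) (simp add: a_minus_def l_minus FS_closed[OF c] FS_closed[OF d] fs_simps)

lemma tmap_sub:
  fixes B :: "('a, 'x, 'y) module_scheme"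
  assumes c: "c \<in> formal_sums R A N" and d: "d \<in> formal_sums R A N"
    and h: "h \<in> carrier A \<rightarrow> carrier B"
  shows "tmap R A h (fs_sub R c d) = fs_sub R (tmap R A h c) (tmap R A h d)"
  using c d tmap_FS[OF c h] tmap_FS[OF d h]
  by (simp add: fs_sub_eq[OF c d] fs_sub_eq[OF tmap_FS[OF c h] tmap_FS[OF d h]]
      tmap_add FS_smult tmap_smult)

lemma FS_induct[consumes 1, case_names zero step]:
  assumes c: "c \<in> formal_sums R A N" and z: "P (\<lambda>p. \<zero>)"
    and st: "\<And>d r p. d \<in> formal_sums R A N \<Longrightarrow> supp R d \<subseteq> supp R c \<Longrightarrow> p \<in> supp R c \<Longrightarrow>
       r \<in> carrier R \<Longrightarrow> P d \<Longrightarrow> P (fs_add R d (fs_smult R r (delta R p)))"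
  shows "P c"
proof -
  define rs where "rs S = (\<lambda>q. if q \<in> S then c q else \<zero>)" for S
  have rsFS: "rs S \<in> formal_sums R A N" "supp R (rs S) \<subseteq> supp R c" if "S \<subseteq> supp R c" for S
    using that c by (auto simp: rs_def FS_iff supp_def intro: finite_subset)
  have "P (rs S)" if "finite S" "S \<subseteq> supp R c" for S
    using that
  proof (induction S rule: finite_induct)
    case empty then show ?case using z by (simp add: rs_def)
  next
    case (insert p S)
    have eq: "rs (insert p S) = fs_add R (rs S) (fs_smult R (c p) (delta R p))"
      using insert.hyps by (auto simp: rs_def delta_def FS_closed[OF c] fs_simps intro!: ext)
    show ?case unfolding eq
      using insert rsFS[of S] by (intro st) (auto simp: FS_closed[OF c])
  qed
  then have "P (rs (supp R c))" using c by (simp add: FS_iff)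
  moreover have "rs (supp R c) = c" by (auto simp: rs_def supp_def intro!: ext)
  ultimately show ?thesis by simp
qed


lemma id1: "x \<in> carrier R \<Longrightarrow> y \<in> carrier R \<Longrightarrow> u \<in> carrier R \<Longrightarrow> v \<in> carrier R \<Longrightarrow>
  (x \<oplus> y) \<ominus> (u \<oplus> v) = (x \<ominus> u) \<oplus> (y \<ominus> v)"
  by (simp add: a_minus_def minus_add a_ac)
lemma id3: "x \<in> carrier R \<Longrightarrow> x \<ominus> \<zero> = x" by (simp add: a_minus_def)
lemma id4: "x \<in> carrier R \<Longrightarrow> y \<in> carrier R \<Longrightarrow> (x \<ominus> y) \<oplus> y = x"
  by (simp add: a_minus_def a_assoc l_neg)
lemma id6: "x \<in> carrier R \<Longrightarrow> u \<in> carrier R \<Longrightarrow> s \<in> carrier R \<Longrightarrow> x \<ominus> u = (x \<ominus> s) \<oplus> (s \<ominus> u)"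
  by (simp add: a_minus_def a_assoc[symmetric]) (simp add: a_assoc l_neg)
lemma id5: "x \<in> carrier R \<Longrightarrow> y \<in> carrier R \<Longrightarrow> z \<in> carrier R \<Longrightarrow> s \<in> carrier R \<Longrightarrow> (x \<ominus> y) \<ominus> z = (x \<ominus> s) \<oplus> ((s \<ominus> y) \<ominus> z)"
  by (simp add: a_minus_def a_assoc[symmetric]) (simp add: a_assoc l_neg)
lemma id8: "x \<in> carrier R \<Longrightarrow> x \<ominus> x = \<zero>" by (simp add: a_minus_def r_neg)
lemma id2: "r \<in> carrier R \<Longrightarrow> x \<in> carrier R \<Longrightarrow> u \<in> carrier R \<Longrightarrow> r \<otimes> x \<ominus> r \<otimes> u = r \<otimes> (x \<ominus> u)"
  by (simp add: a_minus_def r_distr r_minus)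
lemma id7: "x \<in> carrier R \<Longrightarrow> y \<in> carrier R \<Longrightarrow> u \<in> carrier R \<Longrightarrow> v \<in> carrier R \<Longrightarrow> r \<in> carrier R \<Longrightarrow>
  (x \<oplus> r \<otimes> u) \<ominus> (y \<oplus> r \<otimes> v) = (x \<ominus> y) \<oplus> r \<otimes> (u \<ominus> v)"
  by (simp add: id1 id2)

lemma tmap_lin_help1:
  fixes A :: "('a, 'b, 'c) module_scheme" and B :: "('a, 'x, 'y) module_scheme"
    and N :: "('a, 'n, 'e) module_scheme"
  assumes hc: "h \<in> carrier A \<rightarrow> carrier B"
    and a: "aa \<in> carrier A" "ab \<in> carrier A" "ac \<in> carrier A"
    and n: "na \<in> carrier N" "nb \<in> carrier N" "nc \<in> carrier N"
  shows "tmap R A h (fs_sub R (fs_sub R (delta R (aa,na)) (delta R (ab,nb))) (delta R (ac,nc))) =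
     fs_sub R (fs_sub R (delta R (h aa,na)) (delta R (h ab,nb))) (delta R (h ac,nc))"
proof -
  have d1: "delta R (aa,na) \<in> formal_sums R A N" using a n by (rule_tac FS_delta) auto
  have d2: "delta R (ab,nb) \<in> formal_sums R A N" using a n by (rule_tac FS_delta) auto
  have d3: "delta R (ac,nc) \<in> formal_sums R A N" using a n by (rule_tac FS_delta) auto
  show ?thesis
    by (simp only: tmap_sub[OF FS_sub[OF d1 d2] d3 hc] tmap_sub[OF d1 d2 hc]
        tmap_delta[OF a(1) n(1)] tmap_delta[OF a(2) n(2)] tmap_delta[OF a(3) n(3)])
qed

lemma tmap_lin_help2:
  fixes A :: "('a, 'b, 'c) module_scheme" and B :: "('a, 'x, 'y) module_scheme"
    and N :: "('a, 'n, 'e) module_scheme"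
  assumes hc: "h \<in> carrier A \<rightarrow> carrier B" and r: "r \<in> carrier R"
    and a: "aa \<in> carrier A" "ab \<in> carrier A"
    and n: "na \<in> carrier N" "nb \<in> carrier N"
  shows "tmap R A h (fs_sub R (delta R (aa,na)) (fs_smult R r (delta R (ab,nb)))) =
     fs_sub R (delta R (h aa,na)) (fs_smult R r (delta R (h ab,nb)))"
proof -
  have d1: "delta R (aa,na) \<in> formal_sums R A N" using a n by (rule_tac FS_delta) auto
  have d2: "delta R (ab,nb) \<in> formal_sums R A N" using a n by (rule_tac FS_delta) auto
  show ?thesis
    by (simp only: tmap_sub[OF d1 FS_smult[OF r d2] hc] tmap_smult[OF d2 r]
        tmap_delta[OF a(1) n(1)] tmap_delta[OF a(2) n(2)])
qed

lemma tmap_rel: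
  fixes A :: "('a, 'b, 'c) module_scheme" and B :: "('a, 'x, 'y) module_scheme"
    and N :: "('a, 'n, 'e) module_scheme"
  assumes A: "module R A" and B: "module R B" and N: "module R N" and h: "mod_lin R A B h"
    and x: "x \<in> tensor_rel R A N"
  shows "tmap R A h x \<in> tensor_rel R B N"
proof -
  interpret A: module R A by (rule A)
  interpret B: module R B by (rule B)
  interpret N: module R N by (rule N)
  have hc: "h \<in> carrier A \<rightarrow> carrier B" using h by (simp add: mod_lin_def)
  have hcl: "a \<in> carrier A \<Longrightarrow> h a \<in> carrier B" for a using hc by auto
  have hadd: "\<And>x y. x \<in> carrier A \<Longrightarrow> y \<in> carrier A \<Longrightarrow> h (x \<oplus>\<^bsub>A\<^esub> y) = h x \<oplus>\<^bsub>B\<^esub> h y"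
    and hsm: "\<And>r x. r \<in> carrier R \<Longrightarrow> x \<in> carrier A \<Longrightarrow> h (r \<odot>\<^bsub>A\<^esub> x) = r \<odot>\<^bsub>B\<^esub> h x"
    using h by (auto simp: mod_lin_def)
  show ?thesis using x
  proof (induction rule: tensor_rel.induct)
    case zero then show ?case by (simp add: tmap_zero tensor_rel.zero)
  next
    case (add c d)
    then show ?case
      using rel_FS[OF A N add.hyps(1)] rel_FS[OF A N add.hyps(2)]
      by (simp add: tmap_add tensor_rel.add)
  next
    case (smult r c)
    then show ?case
      using rel_FS[OF A N smult.hyps(2)]
      by (simp add: tmap_smult tensor_rel.smult)
  next
    case (lin1 a a' n)
    then show ?case
      using tmap_lin_help1[OF hc, where N=N and aa="a \<oplus>\<^bsub>A\<^esub> a'" and ab=a and ac=a' and na=n and nb=n and nc=n]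
      by (simp add: hadd tensor_rel.lin1 hcl)
  next
    case (lin2 a n n')
    then show ?case
      using tmap_lin_help1[OF hc, where N=N and aa=a and ab=a and ac=a and na="n \<oplus>\<^bsub>N\<^esub> n'" and nb=n and nc=n']
      by (simp add: tensor_rel.lin2 hcl)
  next
    case (lin3 r a n)
    then show ?case
      using tmap_lin_help2[OF hc lin3(1), where N=N and aa="r \<odot>\<^bsub>A\<^esub> a" and ab=a and na=n and nb=n]
      by (simp add: hsm tensor_rel.lin3 hcl)
  next
    case (lin4 r a n)
    then show ?case
      using tmap_lin_help2[OF hc lin4(1), where N=N and aa=a and ab=a and na="r \<odot>\<^bsub>N\<^esub> n" and nb=n]
      by (simp add: tensor_rel.lin4 hcl)
  qed
qed

lemma tmap_tmap_id:
  fixes A :: "('a, 'b, 'c) module_scheme" and B :: "('a, 'x, 'y) module_scheme"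
    and N :: "('a, 'n, 'e) module_scheme"
  assumes c: "c \<in> formal_sums R A N" and h1: "h1 \<in> carrier A \<rightarrow> carrier B"
    and h2: "h2 \<in> carrier B \<rightarrow> carrier A" and id: "\<And>a. a \<in> fst ` supp R c \<Longrightarrow> h2 (h1 a) = a"
  shows "tmap R B h2 (tmap R A h1 c) = c"
  using c
proof (induction rule: FS_induct)
  case zero then show ?case by (simp add: tmap_zero)
next
  case (step d r p)
  obtain a n where pe: "p = (a, n)" by (cases p)
  have an: "a \<in> carrier A" "n \<in> carrier N" using step(3) c pe by (auto simp: FS_iff)
  have h1a: "h1 a \<in> carrier B" using h1 an by auto
  have "h2 (h1 a) = a" using id step(3) pe by force
  have dl: "delta R (a, n) \<in> formal_sums R A N" by (rule FS_delta[OF an])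
  have dl': "delta R (h1 a, n) \<in> formal_sums R B N" by (rule FS_delta[OF h1a an(2)])
  have e1: "tmap R A h1 (fs_add R d (fs_smult R r (delta R p))) =
      fs_add R (tmap R A h1 d) (fs_smult R r (delta R (h1 a, n)))"
    unfolding pe tmap_add[OF step(1) FS_smult[OF step(4) dl]] tmap_smult[OF dl step(4)]
      tmap_delta[OF an] ..
  have e2: "tmap R B h2 (fs_add R (tmap R A h1 d) (fs_smult R r (delta R (h1 a, n)))) =
     fs_add R (tmap R B h2 (tmap R A h1 d)) (fs_smult R r (delta R (h2 (h1 a), n)))"
    unfolding tmap_add[OF tmap_FS[OF step(1) h1] FS_smult[OF step(4) dl']] tmap_smult[OF dl' step(4)]
      tmap_delta[OF h1a an(2)] ..
  show ?case using e1 e2 step(5) \<open>h2 (h1 a) = a\<close> pe by simp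
qed


lemma tensor_inj:
  fixes A :: "('a, 'b, 'c) module_scheme" and B :: "('a, 'x, 'y) module_scheme"
    and N :: "('a, 'n, 'e) module_scheme"
  assumes A: "module R A" and B: "module R B" and N: "module R N" and f: "mod_lin R A B f"
    and loc: "\<And>X. finite X \<Longrightarrow> X \<subseteq> carrier A \<Longrightarrow> \<exists>r. mod_lin R B A r \<and> (\<forall>a\<in>X. r (f a) = a)"
    and c: "c \<in> formal_sums R A N" and t: "tmap R A f c \<in> tensor_rel R B N"
  shows "c \<in> tensor_rel R A N"
proof -
  have "finite (fst ` supp R c)" "fst ` supp R c \<subseteq> carrier A" using c by (auto simp: FS_iff)
  then obtain r where r: "mod_lin R B A r" "\<forall>a\<in>fst ` supp R c. r (f a) = a" using loc by blast
  have "tmap R B r (tmap R A f c) \<in> tensor_rel R A N"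
    by (rule tmap_rel[OF B A N r(1) t])
  moreover have "tmap R B r (tmap R A f c) = c"
    by (rule tmap_tmap_id[OF c]) (use f r in \<open>auto simp: mod_lin_def\<close>)
  ultimately show ?thesis by simp
qed

lemma tensor_surj:
  fixes B :: "('a, 'b, 'c) module_scheme" and C :: "('a, 'x, 'y) module_scheme"
    and N :: "('a, 'n, 'e) module_scheme"
  assumes g: "g \<in> carrier B \<rightarrow> carrier C" and onto: "g ` carrier B = carrier C"
    and c: "c \<in> formal_sums R C N"
  shows "\<exists>d\<in>formal_sums R B N. fs_sub R c (tmap R B g d) \<in> tensor_rel R C N"
proof -
  define \<sigma> where "\<sigma> z = (SOME b. b \<in> carrier B \<and> g b = z)" for z
  have \<sigma>: "\<sigma> z \<in> carrier B" "g (\<sigma> z) = z" if "z \<in> carrier C" for z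
  proof -
    have "\<exists>b. b \<in> carrier B \<and> g b = z" using that onto by (metis imageE)
    then show "\<sigma> z \<in> carrier B" "g (\<sigma> z) = z" unfolding \<sigma>_def by (metis (mono_tags, lifting) someI_ex)+
  qed
  have s: "\<sigma> \<in> carrier C \<rightarrow> carrier B" using \<sigma> by auto
  have "tmap R B g (tmap R C \<sigma> c) = c"
    by (rule tmap_tmap_id[OF c s g]) (use c \<sigma> in \<open>auto simp: FS_iff\<close>)
  moreover have "fs_sub R c c = (\<lambda>p. \<zero>)"
    by (rule ext) (simp add: fs_simps id8 FS_closed[OF c])
  ultimately show ?thesis
    by (intro bexI[of _ "tmap R C \<sigma> c"] tmap_FS[OF c s]) (simp_all add: tensor_rel.zero)
qed


lemma id9: "x \<in> carrier R \<Longrightarrow> y \<in> carrier R \<Longrightarrow> z \<in> carrier R \<Longrightarrow> (x \<ominus> y) \<ominus> z = (x \<ominus> z) \<ominus> y"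
  by (simp add: a_minus_def a_ac)

lemma fs_split1:
  assumes "\<And>p. X p \<in> carrier R" "\<And>p. Y p \<in> carrier R" "\<And>p. Z p \<in> carrier R" "\<And>p. S p \<in> carrier R"
  shows "fs_sub R (fs_sub R X Y) Z = fs_add R (fs_sub R X S) (fs_sub R (fs_sub R S Y) Z)"
  by (rule ext) (unfold fs_simps, rule id5, use assms in auto)

lemma fs_split2:
  assumes "\<And>p. X p \<in> carrier R" "\<And>p. U p \<in> carrier R" "\<And>p. S p \<in> carrier R"
  shows "fs_sub R X U = fs_add R (fs_sub R X S) (fs_sub R S U)"
  by (rule ext) (unfold fs_simps, rule id6, use assms in auto)

lemma delta_closed: "delta R q p \<in> carrier R" by (simp add: delta_def)

lemma mod_lin_minus:
  fixes A :: "('a, 'b, 'c) module_scheme" and B :: "('a, 'x, 'y) module_scheme"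
  assumes A: "module R A" and B: "module R B" and h: "mod_lin R A B h"
    and x: "x \<in> carrier A" and y: "y \<in> carrier A"
  shows "h (x \<ominus>\<^bsub>A\<^esub> y) = h x \<ominus>\<^bsub>B\<^esub> h y"
proof -
  interpret A: module R A by (rule A)
  interpret B: module R B by (rule B)
  have hc: "\<And>a. a \<in> carrier A \<Longrightarrow> h a \<in> carrier B" using h by (auto simp: mod_lin_def)
  have "h x = h ((x \<ominus>\<^bsub>A\<^esub> y) \<oplus>\<^bsub>A\<^esub> y)"
    using x y by (simp add: a_minus_def A.a_assoc A.l_neg)
  also have "\<dots> = h (x \<ominus>\<^bsub>A\<^esub> y) \<oplus>\<^bsub>B\<^esub> h y"
    using h x y by (simp add: mod_lin_def)
  finally have "h x \<ominus>\<^bsub>B\<^esub> h y = (h (x \<ominus>\<^bsub>A\<^esub> y) \<oplus>\<^bsub>B\<^esub> h y) \<ominus>\<^bsub>B\<^esub> h y" by simp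
  also have "\<dots> = h (x \<ominus>\<^bsub>A\<^esub> y)"
    using x y hc by (simp add: a_minus_def B.a_assoc B.r_neg)
  finally show ?thesis by simp
qed

lemma tensor_mid:
  fixes A :: "('a, 'b, 'c) module_scheme" and B :: "('a, 'x, 'y) module_scheme"
    and C :: "('a, 'u, 'v) module_scheme" and N :: "('a, 'n, 'e) module_scheme"
  assumes A: "module R A" and B: "module R B" and C: "module R C" and N: "module R N"
    and f: "mod_lin R A B f" and g: "mod_lin R B C g" and onto: "g ` carrier B = carrier C"
    and ker: "\<And>b. b \<in> carrier B \<Longrightarrow> g b = \<zero>\<^bsub>C\<^esub> \<Longrightarrow> b \<in> f ` carrier A"
    and c: "c \<in> formal_sums R B N" and t: "tmap R B g c \<in> tensor_rel R C N"
  shows "\<exists>d\<in>formal_sums R A N. fs_sub R c (tmap R A f d) \<in> tensor_rel R B N"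
proof -
  interpret A: module R A by (rule A)
  interpret B: module R B by (rule B)
  interpret C: module R C by (rule C)
  interpret N: module R N by (rule N)
  have fc: "f \<in> carrier A \<rightarrow> carrier B" and gc: "g \<in> carrier B \<rightarrow> carrier C"
    using f g by (auto simp: mod_lin_def)
  have gadd: "\<And>x y. x \<in> carrier B \<Longrightarrow> y \<in> carrier B \<Longrightarrow> g (x \<oplus>\<^bsub>B\<^esub> y) = g x \<oplus>\<^bsub>C\<^esub> g y"
    and gsm: "\<And>r x. r \<in> carrier R \<Longrightarrow> x \<in> carrier B \<Longrightarrow> g (r \<odot>\<^bsub>B\<^esub> x) = r \<odot>\<^bsub>C\<^esub> g x"
    using g by (auto simp: mod_lin_def)
  define W where "W = {x \<in> formal_sums R B N. \<exists>d\<in>formal_sums R A N. fs_sub R x (tmap R A f d) \<in> tensor_rel R B N}"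
  have W_rel: "x \<in> W" if x: "x \<in> tensor_rel R B N" for x
  proof -
    have xf: "x \<in> formal_sums R B N" by (rule rel_FS[OF B N x])
    have "fs_sub R x (tmap R A f (\<lambda>p. \<zero>)) = x"
      by (rule ext) (simp add: tmap_zero fs_simps id3 FS_closed[OF xf])
    then show ?thesis unfolding W_def using xf x FS_zero[of A N]
      by (intro CollectI conjI bexI[of _ "\<lambda>p. \<zero>"]) auto
  qed
  have W_add: "fs_add R x y \<in> W" if x: "x \<in> W" and y: "y \<in> W" for x y
  proof -
    obtain d where d: "d \<in> formal_sums R A N" "fs_sub R x (tmap R A f d) \<in> tensor_rel R B N"
      and xf: "x \<in> formal_sums R B N" using x unfolding W_def by auto
    obtain e where e: "e \<in> formal_sums R A N" "fs_sub R y (tmap R A f e) \<in> tensor_rel R B N"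
      and yf: "y \<in> formal_sums R B N" using y unfolding W_def by auto
    have "fs_sub R (fs_add R x y) (tmap R A f (fs_add R d e)) =
        fs_add R (fs_sub R x (tmap R A f d)) (fs_sub R y (tmap R A f e))"
      unfolding tmap_add[OF d(1) e(1)]
      by (rule ext) (simp add: fs_simps id1 FS_closed[OF xf] FS_closed[OF yf]
          FS_closed[OF tmap_FS[OF d(1) fc]] FS_closed[OF tmap_FS[OF e(1) fc]])
    then show ?thesis unfolding W_def
      using FS_add[OF xf yf] FS_add[OF d(1) e(1)] tensor_rel.add[OF d(2) e(2)]
      by (intro CollectI conjI bexI[of _ "fs_add R d e"]) auto
  qed
  have W_smult: "fs_smult R r x \<in> W" if r: "r \<in> carrier R" and x: "x \<in> W" for r x
  proof -
    obtain d where d: "d \<in> formal_sums R A N" "fs_sub R x (tmap R A f d) \<in> tensor_rel R B N"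
      and xf: "x \<in> formal_sums R B N" using x unfolding W_def by auto
    have "fs_sub R (fs_smult R r x) (tmap R A f (fs_smult R r d)) =
        fs_smult R r (fs_sub R x (tmap R A f d))"
      unfolding tmap_smult[OF d(1) r]
      by (rule ext) (simp add: fs_simps id2 r FS_closed[OF xf] FS_closed[OF tmap_FS[OF d(1) fc]])
    then show ?thesis unfolding W_def
      using FS_smult[OF r xf] FS_smult[OF r d(1)] tensor_rel.smult[OF r d(2)]
      by (intro CollectI conjI bexI[of _ "fs_smult R r d"]) auto
  qed
  have W_D: "fs_sub R (delta R (b, n)) (delta R (b', n)) \<in> W"
    if b: "b \<in> carrier B" "b' \<in> carrier B" "g b = g b'" and n: "n \<in> carrier N" for b b' n
  proof -
    have "g (b \<ominus>\<^bsub>B\<^esub> b') = g b \<ominus>\<^bsub>C\<^esub> g b'" by (rule mod_lin_minus[OF B C g b(1,2)])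
    also have "\<dots> = \<zero>\<^bsub>C\<^esub>" using b gc by (simp add: a_minus_def C.r_neg Pi_iff)
    finally obtain a0 where a0: "a0 \<in> carrier A" "b \<ominus>\<^bsub>B\<^esub> b' = f a0"
      using ker[of "b \<ominus>\<^bsub>B\<^esub> b'"] b by auto
    have fa0: "f a0 \<in> carrier B" using fc a0 by auto
    have bb: "b = f a0 \<oplus>\<^bsub>B\<^esub> b'"
      using a0(2)[symmetric] b by (simp add: a_minus_def B.a_assoc B.l_neg)
    have L: "fs_sub R (fs_sub R (delta R (f a0 \<oplus>\<^bsub>B\<^esub> b', n)) (delta R (f a0, n))) (delta R (b', n))
        \<in> tensor_rel R B N"
      by (rule tensor_rel.lin1[OF fa0 b(2) n])
    have da: "delta R (a0, n) \<in> formal_sums R A N" by (rule FS_delta[OF a0(1) n])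
    have "fs_sub R (fs_sub R (delta R (b, n)) (delta R (b', n))) (tmap R A f (delta R (a0, n))) =
      fs_sub R (fs_sub R (delta R (f a0 \<oplus>\<^bsub>B\<^esub> b', n)) (delta R (f a0, n))) (delta R (b', n))"
      unfolding tmap_delta[OF a0(1) n] bb[symmetric]
      by (rule ext) (simp add: fs_simps id9 delta_def)
    with L da show ?thesis unfolding W_def
      using FS_sub[OF FS_delta[OF b(1) n] FS_delta[OF b(2) n]]
      by (intro CollectI conjI bexI[of _ "delta R (a0, n)"]) auto
  qed
  define \<sigma> where "\<sigma> z = (SOME b. b \<in> carrier B \<and> g b = z)" for z
  have \<sigma>: "\<sigma> z \<in> carrier B" "g (\<sigma> z) = z" if "z \<in> carrier C" for z
  proof -
    have "\<exists>b. b \<in> carrier B \<and> g b = z" using that onto by (metis imageE)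
    then show "\<sigma> z \<in> carrier B" "g (\<sigma> z) = z" unfolding \<sigma>_def by (metis (mono_tags, lifting) someI_ex)+
  qed
  have sc: "\<sigma> \<in> carrier C \<rightarrow> carrier B" using \<sigma> by auto
  have Phi: "tmap R C \<sigma> x \<in> W" if x: "x \<in> tensor_rel R C N" for x
    using x
  proof (induction rule: tensor_rel.induct)
    case zero then show ?case using W_rel[OF tensor_rel.zero] by (simp add: tmap_zero)
  next
    case (add c d)
    then show ?case
      using W_add rel_FS[OF C N add.hyps(1)] rel_FS[OF C N add.hyps(2)] by (simp add: tmap_add)
  next
    case (smult r c)
    then show ?case
      using W_smult rel_FS[OF C N smult.hyps(2)] by (simp add: tmap_smult)
  next
    case (lin1 z z' n)
    let ?s = "\<sigma> z \<oplus>\<^bsub>B\<^esub> \<sigma> z'"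
    have zz: "z \<oplus>\<^bsub>C\<^esub> z' \<in> carrier C" using lin1 by auto
    have scl: "\<sigma> z \<in> carrier B" "\<sigma> z' \<in> carrier B" "\<sigma> (z \<oplus>\<^bsub>C\<^esub> z') \<in> carrier B" "?s \<in> carrier B"
      using \<sigma> lin1 zz by auto
    have "g (\<sigma> (z \<oplus>\<^bsub>C\<^esub> z')) = g ?s" using \<sigma> lin1 zz gadd scl by simp
    then have D: "fs_sub R (delta R (\<sigma> (z \<oplus>\<^bsub>C\<^esub> z'), n)) (delta R (?s, n)) \<in> W"
      using W_D scl lin1 by blast
    have L: "fs_sub R (fs_sub R (delta R (?s, n)) (delta R (\<sigma> z, n))) (delta R (\<sigma> z', n)) \<in> W"
      by (rule W_rel[OF tensor_rel.lin1]) (use scl lin1 in auto)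
    have "tmap R C \<sigma> (fs_sub R (fs_sub R (delta R (z \<oplus>\<^bsub>C\<^esub> z', n)) (delta R (z, n))) (delta R (z', n)))
      = fs_sub R (fs_sub R (delta R (\<sigma> (z \<oplus>\<^bsub>C\<^esub> z'), n)) (delta R (\<sigma> z, n))) (delta R (\<sigma> z', n))"
      by (rule tmap_lin_help1[OF sc]) (use lin1 zz in auto)
    also have "\<dots> = fs_add R (fs_sub R (delta R (\<sigma> (z \<oplus>\<^bsub>C\<^esub> z'), n)) (delta R (?s, n)))
       (fs_sub R (fs_sub R (delta R (?s, n)) (delta R (\<sigma> z, n))) (delta R (\<sigma> z', n)))"
      by (rule fs_split1) (simp_all add: delta_closed)
    finally show ?case using W_add[OF D L] by simp
  next
    case (lin2 z n n')
    have "tmap R C \<sigma> (fs_sub R (fs_sub R (delta R (z, n \<oplus>\<^bsub>N\<^esub> n')) (delta R (z, n))) (delta R (z, n')))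
      = fs_sub R (fs_sub R (delta R (\<sigma> z, n \<oplus>\<^bsub>N\<^esub> n')) (delta R (\<sigma> z, n))) (delta R (\<sigma> z, n'))"
      by (rule tmap_lin_help1[OF sc]) (use lin2 in auto)
    then show ?case using W_rel[OF tensor_rel.lin2, of "\<sigma> z" n n'] \<sigma> lin2 by simp
  next
    case (lin3 r z n)
    let ?s = "r \<odot>\<^bsub>B\<^esub> \<sigma> z"
    have rz: "r \<odot>\<^bsub>C\<^esub> z \<in> carrier C" using lin3 by auto
    have scl: "\<sigma> z \<in> carrier B" "\<sigma> (r \<odot>\<^bsub>C\<^esub> z) \<in> carrier B" "?s \<in> carrier B"
      using \<sigma> lin3 rz by auto
    have "g (\<sigma> (r \<odot>\<^bsub>C\<^esub> z)) = g ?s" using \<sigma> lin3 rz gsm scl by simp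
    then have D: "fs_sub R (delta R (\<sigma> (r \<odot>\<^bsub>C\<^esub> z), n)) (delta R (?s, n)) \<in> W"
      using W_D scl lin3 by blast
    have L: "fs_sub R (delta R (?s, n)) (fs_smult R r (delta R (\<sigma> z, n))) \<in> W"
      by (rule W_rel[OF tensor_rel.lin3]) (use scl lin3 in auto)
    have "tmap R C \<sigma> (fs_sub R (delta R (r \<odot>\<^bsub>C\<^esub> z, n)) (fs_smult R r (delta R (z, n))))
      = fs_sub R (delta R (\<sigma> (r \<odot>\<^bsub>C\<^esub> z), n)) (fs_smult R r (delta R (\<sigma> z, n)))"
      by (rule tmap_lin_help2[OF sc]) (use lin3 rz in auto)
    also have "\<dots> = fs_add R (fs_sub R (delta R (\<sigma> (r \<odot>\<^bsub>C\<^esub> z), n)) (delta R (?s, n)))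
       (fs_sub R (delta R (?s, n)) (fs_smult R r (delta R (\<sigma> z, n))))"
      by (rule fs_split2) (simp_all add: delta_closed fs_simps lin3)
    finally show ?case using W_add[OF D L] by simp
  next
    case (lin4 r z n)
    have "tmap R C \<sigma> (fs_sub R (delta R (z, r \<odot>\<^bsub>N\<^esub> n)) (fs_smult R r (delta R (z, n))))
      = fs_sub R (delta R (\<sigma> z, r \<odot>\<^bsub>N\<^esub> n)) (fs_smult R r (delta R (\<sigma> z, n)))"
      by (rule tmap_lin_help2[OF sc]) (use lin4 in auto)
    then show ?case using W_rel[OF tensor_rel.lin4, of r "\<sigma> z" n] \<sigma> lin4 by simp
  qed
  have P1: "tmap R C \<sigma> (tmap R B g c) \<in> W" by (rule Phi[OF t])
  have P2: "fs_sub R c (tmap R C \<sigma> (tmap R B g c)) \<in> W"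
    using c
  proof (induction rule: FS_induct)
    case zero
    have "fs_sub R (\<lambda>p::'x \<times> 'n. \<zero>) (tmap R C \<sigma> (tmap R B g (\<lambda>p::'x \<times> 'n. \<zero>))) = (\<lambda>p. \<zero>)"
      by (rule ext) (simp add: tmap_zero fs_simps id8)
    then show ?case using W_rel[OF tensor_rel.zero] by simp
  next
    case (step d r p)
    obtain b n where pe: "p = (b, n)" by (cases p)
    have bn: "b \<in> carrier B" "n \<in> carrier N" using step(3) c pe by (auto simp: FS_iff)
    have gb: "g b \<in> carrier C" using gc bn by auto
    have sgb: "\<sigma> (g b) \<in> carrier B" "g (\<sigma> (g b)) = g b" using \<sigma>[OF gb] by auto
    have dl: "delta R (b, n) \<in> formal_sums R B N" by (rule FS_delta[OF bn])
    have dl': "delta R (g b, n) \<in> formal_sums R C N" by (rule FS_delta[OF gb bn(2)])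
    have dl'': "delta R (\<sigma> (g b), n) \<in> formal_sums R B N" by (rule FS_delta[OF sgb(1) bn(2)])
    have e1: "tmap R B g (fs_add R d (fs_smult R r (delta R (b, n)))) =
        fs_add R (tmap R B g d) (fs_smult R r (delta R (g b, n)))"
      unfolding tmap_add[OF step(1) FS_smult[OF step(4) dl]] tmap_smult[OF dl step(4)]
        tmap_delta[OF bn] ..
    have e2: "tmap R C \<sigma> (fs_add R (tmap R B g d) (fs_smult R r (delta R (g b, n)))) =
       fs_add R (tmap R C \<sigma> (tmap R B g d)) (fs_smult R r (delta R (\<sigma> (g b), n)))"
      unfolding tmap_add[OF tmap_FS[OF step(1) gc] FS_smult[OF step(4) dl']] tmap_smult[OF dl' step(4)]
        tmap_delta[OF gb bn(2)] ..
    have dd: "tmap R C \<sigma> (tmap R B g d) \<in> formal_sums R B N"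
      by (rule tmap_FS[OF tmap_FS[OF step(1) gc] sc])
    have "fs_sub R (fs_add R d (fs_smult R r (delta R (b, n)))) (tmap R C \<sigma> (tmap R B g (fs_add R d (fs_smult R r (delta R (b, n))))))
      = fs_add R (fs_sub R d (tmap R C \<sigma> (tmap R B g d)))
          (fs_smult R r (fs_sub R (delta R (b, n)) (delta R (\<sigma> (g b), n))))"
      unfolding e1 e2
      by (rule ext) (simp add: fs_simps id7 step(4) FS_closed[OF step(1)] FS_closed[OF dd]
          FS_closed[OF dl] FS_closed[OF dl''])
    moreover have "fs_sub R (delta R (b, n)) (delta R (\<sigma> (g b), n)) \<in> W"
      by (rule W_D) (use bn sgb in auto)
    ultimately show ?case using W_add[OF step(5) W_smult[OF step(4)]] pe by simp
  qed
  have "fs_add R (fs_sub R c (tmap R C \<sigma> (tmap R B g c))) (tmap R C \<sigma> (tmap R B g c)) = c"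
    by (rule ext) (simp add: fs_simps id4 FS_closed[OF c]
        FS_closed[OF tmap_FS[OF tmap_FS[OF c gc] sc]])
  then have "c \<in> W" using W_add[OF P2 P1] by simp
  then show ?thesis unfolding W_def by auto
qed

end


lemma (in abelian_group) ag_id1: "x \<in> carrier G \<Longrightarrow> y \<in> carrier G \<Longrightarrow> z \<in> carrier G \<Longrightarrow>
   x \<ominus> z = (x \<ominus> y) \<oplus> (y \<ominus> z)"
  by (simp add: a_minus_def a_assoc[symmetric]) (simp add: a_assoc l_neg)
lemma (in abelian_group) ag_id2: "x \<in> carrier G \<Longrightarrow> y \<in> carrier G \<Longrightarrow> \<ominus> (x \<ominus> y) = y \<ominus> x"
  by (simp add: a_minus_def minus_add a_comm)
lemma (in abelian_group) ag_id3: "x \<in> carrier G \<Longrightarrow> y \<in> carrier G \<Longrightarrow> u \<in> carrier G \<Longrightarrow> v \<in> carrier G \<Longrightarrow>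
  (x \<oplus> y) \<ominus> (u \<oplus> v) = (x \<ominus> u) \<oplus> (y \<ominus> v)"
  by (simp add: a_minus_def minus_add a_ac)
lemma (in abelian_group) ag_id4: "x \<in> carrier G \<Longrightarrow> x \<ominus> x = \<zero>"
  by (simp add: a_minus_def r_neg)
lemma (in abelian_group) ag_minus_zero: "x \<in> carrier G \<Longrightarrow> y \<in> carrier G \<Longrightarrow> x \<ominus> y = \<zero> \<Longrightarrow> x = y"
proof -
  assume x: "x \<in> carrier G" and y: "y \<in> carrier G" and e: "x \<ominus> y = \<zero>"
  have "x = (x \<ominus> y) \<oplus> y" using x y by (simp add: a_minus_def a_assoc l_neg)
  then show "x = y" using e y by simp
qed
lemma (in module) smult_minus: "a \<in> carrier R \<Longrightarrow> x \<in> carrier M \<Longrightarrow> y \<in> carrier M \<Longrightarrow>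
  a \<odot>\<^bsub>M\<^esub> (x \<ominus>\<^bsub>M\<^esub> y) = a \<odot>\<^bsub>M\<^esub> x \<ominus>\<^bsub>M\<^esub> a \<odot>\<^bsub>M\<^esub> y"
  by (simp add: a_minus_def smult_r_distr smult_r_minus)

definition subm :: "'a ring \<Rightarrow> ('a, 'v) module \<Rightarrow> 'v set \<Rightarrow> bool" where
  "subm R V W \<longleftrightarrow> W \<subseteq> carrier V \<and> \<zero>\<^bsub>V\<^esub> \<in> W \<and> (\<forall>x\<in>W. \<forall>y\<in>W. x \<oplus>\<^bsub>V\<^esub> y \<in> W) \<and>
     (\<forall>r\<in>carrier R. \<forall>x\<in>W. r \<odot>\<^bsub>V\<^esub> x \<in> W)"

definition qcls :: "('a, 'v) module \<Rightarrow> 'v set \<Rightarrow> 'v \<Rightarrow> 'v set set" where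
  "qcls V W x = (\<lambda>y. {y}) ` {y \<in> carrier V. y \<ominus>\<^bsub>V\<^esub> x \<in> W}"

definition qrep :: "('a, 'v) module \<Rightarrow> 'v set \<Rightarrow> 'v set set \<Rightarrow> 'v" where
  "qrep V W X = (SOME x. x \<in> carrier V \<and> qcls V W x = X)"

definition qmod :: "('a, 'v) module \<Rightarrow> 'v set \<Rightarrow> ('a, 'v set set) module" where
  "qmod V W = \<lparr>carrier = qcls V W ` carrier V, mult = undefined, one = undefined,
     zero = qcls V W \<zero>\<^bsub>V\<^esub>, add = \<lambda>X Y. qcls V W (qrep V W X \<oplus>\<^bsub>V\<^esub> qrep V W Y),
     smult = \<lambda>r X. qcls V W (r \<odot>\<^bsub>V\<^esub> qrep V W X)\<rparr>"

locale qctx = module R V for R :: "'a ring" (structure) and V :: "('a, 'v) module" +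
  fixes W assumes W: "subm R V W"
begin

lemma W_sub: "W \<subseteq> carrier V" and W_zero: "\<zero>\<^bsub>V\<^esub> \<in> W"
  and W_add: "x \<in> W \<Longrightarrow> y \<in> W \<Longrightarrow> x \<oplus>\<^bsub>V\<^esub> y \<in> W"
  and W_smult: "r \<in> carrier R \<Longrightarrow> x \<in> W \<Longrightarrow> r \<odot>\<^bsub>V\<^esub> x \<in> W"
  using W by (auto simp: subm_def)

lemma W_neg: "x \<in> W \<Longrightarrow> \<ominus>\<^bsub>V\<^esub> x \<in> W"
proof -
  assume x: "x \<in> W"
  then have xc: "x \<in> carrier V" using W_sub by auto
  have "(\<ominus> \<one>) \<odot>\<^bsub>V\<^esub> x = \<ominus>\<^bsub>V\<^esub> x" using xc by (simp add: smult_l_minus)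
  moreover have "(\<ominus> \<one>) \<odot>\<^bsub>V\<^esub> x \<in> W" using x by (intro W_smult) auto
  ultimately show ?thesis by simp
qed

lemma W_minus: "x \<in> W \<Longrightarrow> y \<in> W \<Longrightarrow> x \<ominus>\<^bsub>V\<^esub> y \<in> W"
  by (simp add: a_minus_def W_add W_neg)

lemma qcls_eq: assumes "x \<in> carrier V" "y \<in> carrier V"
  shows "qcls V W x = qcls V W y \<longleftrightarrow> x \<ominus>\<^bsub>V\<^esub> y \<in> W"
proof -
  have "qcls V W x = qcls V W y \<longleftrightarrow> {z \<in> carrier V. z \<ominus>\<^bsub>V\<^esub> x \<in> W} = {z \<in> carrier V. z \<ominus>\<^bsub>V\<^esub> y \<in> W}"
    unfolding qcls_def by (rule inj_image_eq_iff) (auto intro: inj_onI)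
  also have "\<dots> \<longleftrightarrow> x \<ominus>\<^bsub>V\<^esub> y \<in> W"
  proof
    assume "{z \<in> carrier V. z \<ominus>\<^bsub>V\<^esub> x \<in> W} = {z \<in> carrier V. z \<ominus>\<^bsub>V\<^esub> y \<in> W}"
    moreover have "x \<in> {z \<in> carrier V. z \<ominus>\<^bsub>V\<^esub> x \<in> W}" using assms W_zero by (simp add: ag_id4)
    ultimately show "x \<ominus>\<^bsub>V\<^esub> y \<in> W" by auto
  next
    assume xy: "x \<ominus>\<^bsub>V\<^esub> y \<in> W"
    have yx: "y \<ominus>\<^bsub>V\<^esub> x \<in> W" using W_neg[OF xy] assms by (simp add: ag_id2)
    show "{z \<in> carrier V. z \<ominus>\<^bsub>V\<^esub> x \<in> W} = {z \<in> carrier V. z \<ominus>\<^bsub>V\<^esub> y \<in> W}"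
    proof (intro Collect_cong conj_cong refl iffI)
      fix z assume z: "z \<in> carrier V"
      show "z \<ominus>\<^bsub>V\<^esub> x \<in> W \<Longrightarrow> z \<ominus>\<^bsub>V\<^esub> y \<in> W"
        using W_add[OF _ xy, of "z \<ominus>\<^bsub>V\<^esub> x"] ag_id1[OF z assms(1) assms(2)] by simp
      show "z \<ominus>\<^bsub>V\<^esub> y \<in> W \<Longrightarrow> z \<ominus>\<^bsub>V\<^esub> x \<in> W"
        using W_add[OF _ yx, of "z \<ominus>\<^bsub>V\<^esub> y"] ag_id1[OF z assms(2) assms(1)] by simp
    qed
  qed
  finally show ?thesis .
qed

lemma qrep: assumes "x \<in> carrier V"
  shows "qrep V W (qcls V W x) \<in> carrier V" "qrep V W (qcls V W x) \<ominus>\<^bsub>V\<^esub> x \<in> W"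
proof -
  have ex: "\<exists>y. y \<in> carrier V \<and> qcls V W y = qcls V W x" using assms by auto
  have "qrep V W (qcls V W x) \<in> carrier V \<and> qcls V W (qrep V W (qcls V W x)) = qcls V W x"
    unfolding qrep_def by (rule someI_ex[OF ex])
  then show "qrep V W (qcls V W x) \<in> carrier V" "qrep V W (qcls V W x) \<ominus>\<^bsub>V\<^esub> x \<in> W"
    using qcls_eq assms by auto
qed

lemma Q_carrier: "carrier (qmod V W) = qcls V W ` carrier V" by (simp add: qmod_def)
lemma Q_zero: "\<zero>\<^bsub>qmod V W\<^esub> = qcls V W \<zero>\<^bsub>V\<^esub>" by (simp add: qmod_def)

lemma Q_add: assumes "x \<in> carrier V" "y \<in> carrier V"
  shows "qcls V W x \<oplus>\<^bsub>qmod V W\<^esub> qcls V W y = qcls V W (x \<oplus>\<^bsub>V\<^esub> y)"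
proof -
  let ?x = "qrep V W (qcls V W x)" and ?y = "qrep V W (qcls V W y)"
  have "(?x \<oplus>\<^bsub>V\<^esub> ?y) \<ominus>\<^bsub>V\<^esub> (x \<oplus>\<^bsub>V\<^esub> y) = (?x \<ominus>\<^bsub>V\<^esub> x) \<oplus>\<^bsub>V\<^esub> (?y \<ominus>\<^bsub>V\<^esub> y)"
    using qrep assms by (simp add: ag_id3)
  also have "\<dots> \<in> W" using qrep assms by (intro W_add) auto
  finally show ?thesis using qrep assms by (simp add: qmod_def qcls_eq)
qed

lemma Q_smult: assumes "r \<in> carrier R" "x \<in> carrier V"
  shows "r \<odot>\<^bsub>qmod V W\<^esub> qcls V W x = qcls V W (r \<odot>\<^bsub>V\<^esub> x)"
proof -
  let ?x = "qrep V W (qcls V W x)"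
  have "(r \<odot>\<^bsub>V\<^esub> ?x) \<ominus>\<^bsub>V\<^esub> (r \<odot>\<^bsub>V\<^esub> x) = r \<odot>\<^bsub>V\<^esub> (?x \<ominus>\<^bsub>V\<^esub> x)"
    using qrep assms by (simp add: smult_minus)
  also have "\<dots> \<in> W" using qrep assms by (intro W_smult) auto
  finally show ?thesis using qrep assms by (simp add: qmod_def qcls_eq)
qed

lemma Q_module: "module R (qmod V W)"
proof (rule moduleI)
  show "cring R" by (rule is_cring)
  show "abelian_group (qmod V W)"
  proof (rule abelian_groupI)
    fix X Y Z assume "X \<in> carrier (qmod V W)" "Y \<in> carrier (qmod V W)" "Z \<in> carrier (qmod V W)"
    then obtain x y z where xyz: "x \<in> carrier V" "y \<in> carrier V" "z \<in> carrier V"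
      "X = qcls V W x" "Y = qcls V W y" "Z = qcls V W z" by (auto simp: Q_carrier)
    show "X \<oplus>\<^bsub>qmod V W\<^esub> Y \<in> carrier (qmod V W)" using xyz by (simp add: Q_add Q_carrier)
    show "X \<oplus>\<^bsub>qmod V W\<^esub> Y \<oplus>\<^bsub>qmod V W\<^esub> Z = X \<oplus>\<^bsub>qmod V W\<^esub> (Y \<oplus>\<^bsub>qmod V W\<^esub> Z)"
      using xyz by (simp add: Q_add a_assoc)
    show "X \<oplus>\<^bsub>qmod V W\<^esub> Y = Y \<oplus>\<^bsub>qmod V W\<^esub> X"
      using xyz by (simp add: Q_add a_comm)
  next
    show "\<zero>\<^bsub>qmod V W\<^esub> \<in> carrier (qmod V W)" by (simp add: Q_zero Q_carrier)
  next
    fix X assume "X \<in> carrier (qmod V W)"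
    then obtain x where x: "x \<in> carrier V" "X = qcls V W x" by (auto simp: Q_carrier)
    show "\<zero>\<^bsub>qmod V W\<^esub> \<oplus>\<^bsub>qmod V W\<^esub> X = X" using x by (simp add: Q_zero Q_add)
    show "\<exists>Y\<in>carrier (qmod V W). Y \<oplus>\<^bsub>qmod V W\<^esub> X = \<zero>\<^bsub>qmod V W\<^esub>"
      using x by (intro bexI[of _ "qcls V W (\<ominus>\<^bsub>V\<^esub> x)"]) (auto simp: Q_zero Q_add Q_carrier l_neg)
  qed
next
  fix a X assume ab: "a \<in> carrier R" and "X \<in> carrier (qmod V W)"
  then obtain x where x: "x \<in> carrier V" "X = qcls V W x" by (auto simp: Q_carrier)
  show "a \<odot>\<^bsub>qmod V W\<^esub> X \<in> carrier (qmod V W)" using x ab by (simp add: Q_smult Q_carrier)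
next
  fix a b X assume ab: "a \<in> carrier R" "b \<in> carrier R" and "X \<in> carrier (qmod V W)"
  then obtain x where x: "x \<in> carrier V" "X = qcls V W x" by (auto simp: Q_carrier)
  show "(a \<oplus> b) \<odot>\<^bsub>qmod V W\<^esub> X = a \<odot>\<^bsub>qmod V W\<^esub> X \<oplus>\<^bsub>qmod V W\<^esub> b \<odot>\<^bsub>qmod V W\<^esub> X"
    using x ab by (simp add: Q_smult Q_add smult_l_distr)
next
  fix a X Y assume a: "a \<in> carrier R" and "X \<in> carrier (qmod V W)" "Y \<in> carrier (qmod V W)"
  then obtain x y where xy: "x \<in> carrier V" "y \<in> carrier V" "X = qcls V W x" "Y = qcls V W y"
    by (auto simp: Q_carrier)
  show "a \<odot>\<^bsub>qmod V W\<^esub> (X \<oplus>\<^bsub>qmod V W\<^esub> Y) = a \<odot>\<^bsub>qmod V W\<^esub> X \<oplus>\<^bsub>qmod V W\<^esub> a \<odot>\<^bsub>qmod V W\<^esub> Y"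
    using xy a by (simp add: Q_smult Q_add smult_r_distr)
next
  fix a b X assume ab: "a \<in> carrier R" "b \<in> carrier R" and "X \<in> carrier (qmod V W)"
  then obtain x where x: "x \<in> carrier V" "X = qcls V W x" by (auto simp: Q_carrier)
  show "(a \<otimes> b) \<odot>\<^bsub>qmod V W\<^esub> X = a \<odot>\<^bsub>qmod V W\<^esub> (b \<odot>\<^bsub>qmod V W\<^esub> X)"
    using x ab by (simp add: Q_smult smult_assoc1)
next
  fix X assume "X \<in> carrier (qmod V W)"
  then obtain x where x: "x \<in> carrier V" "X = qcls V W x" by (auto simp: Q_carrier)
  show "\<one> \<odot>\<^bsub>qmod V W\<^esub> X = X" using x by (simp add: Q_smult)
qed

end

lemma module_restrict:
  fixes R :: "'a ring" and M :: "('a, 'v) module"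
  assumes M: "module R M" and S: "S \<subseteq> carrier M" "\<zero>\<^bsub>M\<^esub> \<in> S"
    and add: "\<And>x y. x \<in> S \<Longrightarrow> y \<in> S \<Longrightarrow> x \<oplus>\<^bsub>M\<^esub> y \<in> S"
    and sm: "\<And>r x. r \<in> carrier R \<Longrightarrow> x \<in> S \<Longrightarrow> r \<odot>\<^bsub>M\<^esub> x \<in> S"
  shows "module R (M\<lparr>carrier := S\<rparr>)"
proof -
  interpret M: module R M by (rule M)
  show ?thesis
  proof (rule moduleI)
    show "cring R" by (rule M.is_cring)
    show "abelian_group (M\<lparr>carrier := S\<rparr>)"
    proof (rule abelian_groupI)
      fix x assume x: "x \<in> carrier (M\<lparr>carrier := S\<rparr>)"
      then have xc: "x \<in> carrier M" using S by auto
      have "(\<ominus>\<^bsub>R\<^esub> \<one>\<^bsub>R\<^esub>) \<odot>\<^bsub>M\<^esub> x \<in> S" using x sm by simp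
      moreover have "(\<ominus>\<^bsub>R\<^esub> \<one>\<^bsub>R\<^esub>) \<odot>\<^bsub>M\<^esub> x \<oplus>\<^bsub>M\<^esub> x = \<zero>\<^bsub>M\<^esub>"
        using xc by (simp add: M.smult_l_minus M.l_neg)
      ultimately show "\<exists>y\<in>carrier (M\<lparr>carrier := S\<rparr>). y \<oplus>\<^bsub>M\<lparr>carrier := S\<rparr>\<^esub> x = \<zero>\<^bsub>M\<lparr>carrier := S\<rparr>\<^esub>"
        by auto
    qed (use S add in \<open>auto simp: M.a_ac subsetD\<close>)
  qed (use S add sm in \<open>auto simp: M.smult_l_distr M.smult_r_distr M.smult_assoc1 subsetD\<close>)
qed


lemma mlin_minus:
  fixes A :: "('a, 'b, 'c) module_scheme" and B :: "('a, 'x, 'y) module_scheme"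
  assumes A: "module R A" and B: "module R B" and h: "mod_lin R A B h"
    and x: "x \<in> carrier A" and y: "y \<in> carrier A"
  shows "h (x \<ominus>\<^bsub>A\<^esub> y) = h x \<ominus>\<^bsub>B\<^esub> h y"
proof -
  interpret A: module R A by (rule A)
  interpret B: module R B by (rule B)
  have hc: "\<And>a. a \<in> carrier A \<Longrightarrow> h a \<in> carrier B" using h by (auto simp: mod_lin_def)
  have "h x = h ((x \<ominus>\<^bsub>A\<^esub> y) \<oplus>\<^bsub>A\<^esub> y)"
    using x y by (simp add: a_minus_def A.a_assoc A.l_neg)
  also have "\<dots> = h (x \<ominus>\<^bsub>A\<^esub> y) \<oplus>\<^bsub>B\<^esub> h y"
    using h x y by (simp add: mod_lin_def)
  finally have "h x \<ominus>\<^bsub>B\<^esub> h y = (h (x \<ominus>\<^bsub>A\<^esub> y) \<oplus>\<^bsub>B\<^esub> h y) \<ominus>\<^bsub>B\<^esub> h y" by simp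
  also have "\<dots> = h (x \<ominus>\<^bsub>A\<^esub> y)"
    using x y hc by (simp add: a_minus_def B.a_assoc B.r_neg)
  finally show ?thesis by simp
qed


definition V0 :: "'a ring \<Rightarrow> ('a, nat \<Rightarrow> 'a) module" where
  "V0 R = \<lparr>carrier = {x. (\<forall>i. x i \<in> carrier R) \<and> finite {i. x i \<noteq> \<zero>\<^bsub>R\<^esub>}},
     mult = undefined, one = undefined, zero = (\<lambda>i. \<zero>\<^bsub>R\<^esub>),
     add = (\<lambda>x y i. x i \<oplus>\<^bsub>R\<^esub> y i), smult = (\<lambda>r x i. r \<otimes>\<^bsub>R\<^esub> x i)\<rparr>"

definition bnd :: "'a ring \<Rightarrow> nat \<Rightarrow> (nat \<Rightarrow> 'a) \<Rightarrow> bool" where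
  "bnd R M x \<longleftrightarrow> (\<forall>i>M. x i = \<zero>\<^bsub>R\<^esub>)"

definition ev :: "'a ring \<Rightarrow> 'a \<Rightarrow> nat \<Rightarrow> (nat \<Rightarrow> 'a) \<Rightarrow> 'a" where
  "ev R a M x = (\<Oplus>\<^bsub>R\<^esub>i\<in>{..M}. x i \<otimes>\<^bsub>R\<^esub> a [^]\<^bsub>R\<^esub> (M - i))"

context cring begin
end

locale vctx = cring R for R :: "'a ring" (structure)
begin

lemma V0_carrier: "x \<in> carrier (V0 R) \<longleftrightarrow> (\<forall>i. x i \<in> carrier R) \<and> finite {i. x i \<noteq> \<zero>}"
  by (simp add: V0_def)
lemma V0_add: "x \<oplus>\<^bsub>V0 R\<^esub> y = (\<lambda>i. x i \<oplus> y i)" by (simp add: V0_def)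
lemma V0_smult: "r \<odot>\<^bsub>V0 R\<^esub> x = (\<lambda>i. r \<otimes> x i)" by (simp add: V0_def)
lemma V0_zero: "\<zero>\<^bsub>V0 R\<^esub> = (\<lambda>i. \<zero>)" by (simp add: V0_def)

lemma V0_module: "module R (V0 R)"
proof (rule moduleI)
  show "cring R" by (rule is_cring)
  show "abelian_group (V0 R)"
  proof (rule abelian_groupI)
    fix x y assume x: "x \<in> carrier (V0 R)" and y: "y \<in> carrier (V0 R)"
    have "{i. x i \<oplus> y i \<noteq> \<zero>} \<subseteq> {i. x i \<noteq> \<zero>} \<union> {i. y i \<noteq> \<zero>}"
      using x y by (auto simp: V0_carrier)
    then show "x \<oplus>\<^bsub>V0 R\<^esub> y \<in> carrier (V0 R)"
      using x y by (auto simp: V0_carrier V0_add intro: finite_subset)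
  next
    show "\<zero>\<^bsub>V0 R\<^esub> \<in> carrier (V0 R)" by (simp add: V0_carrier V0_zero)
  next
    fix x y z assume "x \<in> carrier (V0 R)" "y \<in> carrier (V0 R)" "z \<in> carrier (V0 R)"
    then show "x \<oplus>\<^bsub>V0 R\<^esub> y \<oplus>\<^bsub>V0 R\<^esub> z = x \<oplus>\<^bsub>V0 R\<^esub> (y \<oplus>\<^bsub>V0 R\<^esub> z)"
      by (simp add: V0_carrier V0_add a_assoc)
  next
    fix x y assume "x \<in> carrier (V0 R)" "y \<in> carrier (V0 R)"
    then show "x \<oplus>\<^bsub>V0 R\<^esub> y = y \<oplus>\<^bsub>V0 R\<^esub> x"
      by (simp add: V0_carrier V0_add a_comm)
  next
    fix x assume "x \<in> carrier (V0 R)"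
    then show "\<zero>\<^bsub>V0 R\<^esub> \<oplus>\<^bsub>V0 R\<^esub> x = x"
      by (simp add: V0_carrier V0_add V0_zero)
  next
    fix x assume x: "x \<in> carrier (V0 R)"
    have "{i. \<ominus> x i \<noteq> \<zero>} \<subseteq> {i. x i \<noteq> \<zero>}" using x by (auto simp: V0_carrier)
    then have "(\<lambda>i. \<ominus> x i) \<in> carrier (V0 R)" using x by (auto simp: V0_carrier intro: finite_subset)
    moreover have "(\<lambda>i. \<ominus> x i) \<oplus>\<^bsub>V0 R\<^esub> x = \<zero>\<^bsub>V0 R\<^esub>"
      using x by (simp add: V0_carrier V0_add V0_zero l_neg)
    ultimately show "\<exists>y\<in>carrier (V0 R). y \<oplus>\<^bsub>V0 R\<^esub> x = \<zero>\<^bsub>V0 R\<^esub>" by blast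
  qed
next
  fix a x assume a: "a \<in> carrier R" and x: "x \<in> carrier (V0 R)"
  have "{i. a \<otimes> x i \<noteq> \<zero>} \<subseteq> {i. x i \<noteq> \<zero>}" using x a by (auto simp: V0_carrier)
  then show "a \<odot>\<^bsub>V0 R\<^esub> x \<in> carrier (V0 R)" using x a by (auto simp: V0_carrier V0_smult intro: finite_subset)
next
  fix a b x assume "a \<in> carrier R" "b \<in> carrier R" "x \<in> carrier (V0 R)"
  then show "(a \<oplus> b) \<odot>\<^bsub>V0 R\<^esub> x = a \<odot>\<^bsub>V0 R\<^esub> x \<oplus>\<^bsub>V0 R\<^esub> b \<odot>\<^bsub>V0 R\<^esub> x"
    by (simp add: V0_carrier V0_smult V0_add l_distr)
next
  fix a x y assume "a \<in> carrier R" "x \<in> carrier (V0 R)" "y \<in> carrier (V0 R)"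
  then show "a \<odot>\<^bsub>V0 R\<^esub> (x \<oplus>\<^bsub>V0 R\<^esub> y) = a \<odot>\<^bsub>V0 R\<^esub> x \<oplus>\<^bsub>V0 R\<^esub> a \<odot>\<^bsub>V0 R\<^esub> y"
    by (simp add: V0_carrier V0_smult V0_add r_distr)
next
  fix a b x assume "a \<in> carrier R" "b \<in> carrier R" "x \<in> carrier (V0 R)"
  then show "(a \<otimes> b) \<odot>\<^bsub>V0 R\<^esub> x = a \<odot>\<^bsub>V0 R\<^esub> (b \<odot>\<^bsub>V0 R\<^esub> x)"
    by (simp add: V0_carrier V0_smult m_assoc)
next
  fix x assume "x \<in> carrier (V0 R)"
  then show "\<one> \<odot>\<^bsub>V0 R\<^esub> x = x" by (simp add: V0_carrier V0_smult)
qed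

sublocale V: module R "V0 R" by (rule V0_module)

lemma V0_neg: assumes x: "x \<in> carrier (V0 R)" shows "\<ominus>\<^bsub>V0 R\<^esub> x = (\<lambda>i. \<ominus> x i)"
proof -
  interpret V: module R "V0 R" by (rule V0_module)
  have c: "(\<lambda>i. \<ominus> x i) \<in> carrier (V0 R)"
  proof -
    have "{i. \<ominus> x i \<noteq> \<zero>} \<subseteq> {i. x i \<noteq> \<zero>}" using x by (auto simp: V0_carrier)
    then show ?thesis using x by (auto simp: V0_carrier intro: finite_subset)
  qed
  have "(\<lambda>i. \<ominus> x i) \<oplus>\<^bsub>V0 R\<^esub> x = \<zero>\<^bsub>V0 R\<^esub>"
    using x by (simp add: V0_carrier V0_add V0_zero l_neg)
  then show ?thesis using V.add.inv_equality[OF _ x c] by (simp add: a_inv_def)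
qed

lemma V0_minus: "x \<in> carrier (V0 R) \<Longrightarrow> y \<in> carrier (V0 R) \<Longrightarrow> x \<ominus>\<^bsub>V0 R\<^esub> y = (\<lambda>i. x i \<ominus> y i)"
  by (simp add: a_minus_def V0_neg V0_add)

lemma V0_bnd: assumes "x \<in> carrier (V0 R)" shows "\<exists>M. bnd R M x"
proof -
  have "finite {i. x i \<noteq> \<zero>}" using assms by (simp add: V0_carrier)
  then obtain M where "\<forall>i\<in>{i. x i \<noteq> \<zero>}. i \<le> M" using finite_nat_set_iff_bounded_le by blast
  then have "bnd R M x" unfolding bnd_def by (metis (mono_tags, lifting) mem_Collect_eq not_less)
  then show ?thesis by blast
qed

lemma ev_closed: "(\<And>i. x i \<in> carrier R) \<Longrightarrow> a \<in> carrier R \<Longrightarrow> ev R a M x \<in> carrier R"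
  by (simp add: ev_def finsum_closed Pi_def)

lemma ev_add: "(\<And>i. x i \<in> carrier R) \<Longrightarrow> (\<And>i. y i \<in> carrier R) \<Longrightarrow> a \<in> carrier R \<Longrightarrow>
   ev R a M (\<lambda>i. x i \<oplus> y i) = ev R a M x \<oplus> ev R a M y"
  by (simp add: ev_def l_distr finsum_addf Pi_def)

lemma ev_smult: "(\<And>i. x i \<in> carrier R) \<Longrightarrow> r \<in> carrier R \<Longrightarrow> a \<in> carrier R \<Longrightarrow>
   ev R a M (\<lambda>i. r \<otimes> x i) = r \<otimes> ev R a M x"
  by (simp add: ev_def finsum_rdistr m_assoc Pi_def)

lemma ev_cong: "(\<And>i. i \<le> M \<Longrightarrow> x i = y i) \<Longrightarrow> (\<And>i. y i \<in> carrier R) \<Longrightarrow> a \<in> carrier R \<Longrightarrow>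
   ev R a M x = ev R a M y"
  unfolding ev_def by (rule finsum_cong') auto

lemma ev_shift: assumes x: "\<And>i. x i \<in> carrier R" and a: "a \<in> carrier R" and b: "bnd R M x"
  shows "ev R a (M + k) x = a [^] k \<otimes> ev R a M x"
proof (induction k)
  case 0 then show ?case using x a by (simp add: ev_closed)
next
  case (Suc k)
  have z: "x (Suc (M + k)) = \<zero>" using b by (simp add: bnd_def)
  have "ev R a (M + Suc k) x = (\<Oplus>i\<in>{..M + k}. x i \<otimes> a [^] (Suc (M + k) - i))"
    using x a z by (simp add: ev_def Pi_def)
  also have "\<dots> = (\<Oplus>i\<in>{..M + k}. (x i \<otimes> a [^] (M + k - i)) \<otimes> a)"
    by (rule finsum_cong') (use x a in \<open>auto simp: Suc_diff_le m_assoc Pi_def\<close>)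
  also have "\<dots> = ev R a (M + k) x \<otimes> a"
    unfolding ev_def by (rule finsum_ldistr[symmetric]) (use x a in \<open>auto simp: Pi_def\<close>)
  also have "\<dots> = a [^] Suc k \<otimes> ev R a M x"
    using Suc x a by (simp add: ev_closed m_ac)
  finally show ?case .
qed

lemma finsum_ideal: assumes I: "ideal I R" and fin: "finite S" and f: "\<And>i. i \<in> S \<Longrightarrow> f i \<in> I"
  shows "(\<Oplus>i\<in>S. f i) \<in> I"
  using fin f
proof (induction S rule: finite_induct)
  case empty then show ?case by (simp add: additive_subgroup.zero_closed[OF ideal.axioms(1)[OF I]])
next
  case (insert j S)
  have fc: "f \<in> insert j S \<rightarrow> carrier R" using insert.prems ideal.Icarr[OF I] by auto
  then show ?case using insert
    by (simp add: finsum_insert additive_subgroup.a_closed[OF ideal.axioms(1)[OF I]])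
qed

end


definition PN :: "'a ring \<Rightarrow> 'a set \<Rightarrow> (nat \<Rightarrow> 'a) set" where
  "PN R P = {x \<in> carrier (V0 R). \<forall>i. x i \<in> P}"
definition LL :: "'a ring \<Rightarrow> 'a set \<Rightarrow> 'a \<Rightarrow> (nat \<Rightarrow> 'a) set" where
  "LL R P a = {x \<in> carrier (V0 R). \<exists>M. bnd R M x \<and> ev R a M x \<in> P}"
definition ee :: "'a ring \<Rightarrow> nat \<Rightarrow> nat \<Rightarrow> 'a" where
  "ee R n = (\<lambda>i. if i = n then \<one>\<^bsub>R\<^esub> else \<zero>\<^bsub>R\<^esub>)"
definition rho :: "'a ring \<Rightarrow> 'a \<Rightarrow> nat \<Rightarrow> (nat \<Rightarrow> 'a) \<Rightarrow> nat \<Rightarrow> 'a" where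
  "rho R a N x = (\<lambda>i. (if i \<le> N then x i else \<zero>\<^bsub>R\<^esub>) \<oplus>\<^bsub>R\<^esub> (\<ominus>\<^bsub>R\<^esub> ev R a N x) \<otimes>\<^bsub>R\<^esub> ee R N i)"

locale pctx = vctx R for R :: "'a ring" (structure) +
  fixes P a
  assumes P: "primeideal P R" and a: "a \<in> carrier R" "a \<notin> P"
    and nu: "\<And>d. d \<in> carrier R \<Longrightarrow> a \<otimes> d \<ominus> \<one> \<notin> P"
begin

lemma Pid: "ideal P R" using P by (simp add: primeideal_def)
lemma P_sub: "x \<in> P \<Longrightarrow> x \<in> carrier R" using ideal.Icarr[OF Pid] by blast
lemma P_zero: "\<zero> \<in> P" using additive_subgroup.zero_closed[OF ideal.axioms(1)[OF Pid]] by simp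
lemma P_add: "x \<in> P \<Longrightarrow> y \<in> P \<Longrightarrow> x \<oplus> y \<in> P"
  using additive_subgroup.a_closed[OF ideal.axioms(1)[OF Pid]] by simp
lemma P_neg: "x \<in> P \<Longrightarrow> \<ominus> x \<in> P"
  using additive_subgroup.a_inv_closed[OF ideal.axioms(1)[OF Pid]] by simp
lemma P_lmult: "x \<in> P \<Longrightarrow> r \<in> carrier R \<Longrightarrow> r \<otimes> x \<in> P"
  using ideal.I_l_closed[OF Pid] by simp
lemma P_rmult: "x \<in> P \<Longrightarrow> r \<in> carrier R \<Longrightarrow> x \<otimes> r \<in> P"
  using ideal.I_r_closed[OF Pid] by simp
lemma P_prime: "x \<in> carrier R \<Longrightarrow> y \<in> carrier R \<Longrightarrow> x \<otimes> y \<in> P \<Longrightarrow> x \<in> P \<or> y \<in> P"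
  using primeideal.I_prime[OF P] by simp
lemma one_notin: "\<one> \<notin> P"
  using ideal.one_imp_carrier[OF Pid] primeideal.I_notcarr[OF P] by auto

lemma pow_notin: "a [^] (k::nat) \<notin> P"
proof (induction k)
  case 0 then show ?case using one_notin by simp
next
  case (Suc k)
  show ?case
  proof
    assume "a [^] Suc k \<in> P"
    then have "a [^] k \<otimes> a \<in> P" by simp
    then have "a [^] k \<in> P \<or> a \<in> P" using P_prime a(1) nat_pow_closed by blast
    then show False using Suc a(2) by blast
  qed
qed

lemma pow_cancel: "y \<in> carrier R \<Longrightarrow> a [^] (k::nat) \<otimes> y \<in> P \<Longrightarrow> y \<in> P"
  using P_prime[of "a [^] k" y] pow_notin a nat_pow_closed by blast

lemma V0c: "x \<in> carrier (V0 R) \<Longrightarrow> x i \<in> carrier R" by (simp add: V0_carrier)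

lemma bnd_mono: "bnd R M x \<Longrightarrow> M \<le> N \<Longrightarrow> bnd R N x" by (simp add: bnd_def)

lemma LL_all: assumes x: "x \<in> LL R P a" and b: "bnd R N x" shows "ev R a N x \<in> P"
proof -
  obtain M where M: "bnd R M x" "ev R a M x \<in> P" and xc: "x \<in> carrier (V0 R)"
    using x by (auto simp: LL_def)
  have xi: "\<And>i. x i \<in> carrier R" using xc by (simp add: V0c)
  show ?thesis
  proof (cases "M \<le> N")
    case True
    then have "ev R a N x = a [^] (N - M) \<otimes> ev R a M x"
      using ev_shift[OF xi a(1) M(1), of "N - M"] by simp
    then show ?thesis using M(2) P_lmult a by simp
  next
    case False
    then have "ev R a M x = a [^] (M - N) \<otimes> ev R a N x"
      using ev_shift[OF xi a(1) b, of "M - N"] by simp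
    then show ?thesis using pow_cancel[OF ev_closed[OF xi a(1)], of "M - N"] M(2) by simp
  qed
qed

lemma PN_subm: "subm R (V0 R) (PN R P)"
  unfolding subm_def PN_def
  by (auto simp: V0_zero V0_add V0_smult P_zero P_add P_lmult
      V.smult_closed[unfolded V0_smult] V.a_closed[unfolded V0_add]
      V.zero_closed[unfolded V0_zero])

lemma ev_in_P: "(\<And>i. x i \<in> P) \<Longrightarrow> ev R a N x \<in> P"
  unfolding ev_def by (rule finsum_ideal[OF Pid]) (auto intro: P_rmult a)

lemma PN_LL: "PN R P \<subseteq> LL R P a"
proof
  fix x assume x: "x \<in> PN R P"
  then obtain M where "bnd R M x" using V0_bnd by (auto simp: PN_def)
  moreover have "ev R a M x \<in> P" using x by (intro ev_in_P) (simp add: PN_def)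
  moreover have "x \<in> carrier (V0 R)" using x by (simp add: PN_def)
  ultimately show "x \<in> LL R P a" unfolding LL_def by blast
qed

lemma LL_subm: "subm R (V0 R) (LL R P a)"
  unfolding subm_def
proof (intro conjI ballI)
  show "LL R P a \<subseteq> carrier (V0 R)" by (auto simp: LL_def)
  show "\<zero>\<^bsub>V0 R\<^esub> \<in> LL R P a"
    using PN_LL PN_subm by (auto simp: subm_def)
next
  fix x y assume x: "x \<in> LL R P a" and y: "y \<in> LL R P a"
  have xc: "x \<in> carrier (V0 R)" and yc: "y \<in> carrier (V0 R)" using x y by (auto simp: LL_def)
  obtain M1 M2 where "bnd R M1 x" "bnd R M2 y" using V0_bnd xc yc by blast
  then have b: "bnd R (max M1 M2) x" "bnd R (max M1 M2) y" by (auto intro: bnd_mono)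
  then have bs: "bnd R (max M1 M2) (x \<oplus>\<^bsub>V0 R\<^esub> y)" by (simp add: bnd_def V0_add)
  have "ev R a (max M1 M2) (x \<oplus>\<^bsub>V0 R\<^esub> y) = ev R a (max M1 M2) x \<oplus> ev R a (max M1 M2) y"
    using xc yc a by (simp add: V0_add ev_add V0c)
  also have "\<dots> \<in> P" using LL_all[OF x b(1)] LL_all[OF y b(2)] by (rule P_add)
  finally have "ev R a (max M1 M2) (x \<oplus>\<^bsub>V0 R\<^esub> y) \<in> P" .
  moreover have "x \<oplus>\<^bsub>V0 R\<^esub> y \<in> carrier (V0 R)" by (rule V.a_closed[OF xc yc])
  ultimately show "x \<oplus>\<^bsub>V0 R\<^esub> y \<in> LL R P a"
    using bs unfolding LL_def by blast
next
  fix r x assume r: "r \<in> carrier R" and x: "x \<in> LL R P a"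
  have xc: "x \<in> carrier (V0 R)" using x by (auto simp: LL_def)
  obtain M where b: "bnd R M x" using V0_bnd xc by blast
  then have bs: "bnd R M (r \<odot>\<^bsub>V0 R\<^esub> x)" using r by (simp add: bnd_def V0_smult)
  have "ev R a M (r \<odot>\<^bsub>V0 R\<^esub> x) = r \<otimes> ev R a M x"
    using xc a r by (simp add: V0_smult ev_smult V0c)
  also have "\<dots> \<in> P" using LL_all[OF x b] r by (rule P_lmult)
  finally have "ev R a M (r \<odot>\<^bsub>V0 R\<^esub> x) \<in> P" .
  moreover have "r \<odot>\<^bsub>V0 R\<^esub> x \<in> carrier (V0 R)" by (rule V.smult_closed[OF r xc])
  ultimately show "r \<odot>\<^bsub>V0 R\<^esub> x \<in> LL R P a"
    using bs unfolding LL_def by blast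
qed


sublocale QP: qctx R "V0 R" "PN R P" by (unfold_locales) (rule PN_subm)
sublocale QL: qctx R "V0 R" "LL R P a" by (unfold_locales) (rule LL_subm)

abbreviation "clsP \<equiv> qcls (V0 R) (PN R P)"
abbreviation "clsL \<equiv> qcls (V0 R) (LL R P a)"
abbreviation "FF \<equiv> qmod (V0 R) (PN R P)"
abbreviation "CC \<equiv> qmod (V0 R) (LL R P a)"
abbreviation "KK \<equiv> FF\<lparr>carrier := clsP ` LL R P a\<rparr>"
definition "gg X = clsL (qrep (V0 R) (PN R P) X)"

lemma LL_V0: "LL R P a \<subseteq> carrier (V0 R)" by (auto simp: LL_def)
lemma PN_V0: "PN R P \<subseteq> carrier (V0 R)" by (auto simp: PN_def)
lemma LL_zero: "\<zero>\<^bsub>V0 R\<^esub> \<in> LL R P a" using LL_subm by (simp add: subm_def)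

lemma F_module: "module R FF" by (rule QP.Q_module)
lemma C_module: "module R CC" by (rule QL.Q_module)

lemma K_sub: "carrier KK \<subseteq> carrier FF"
  using LL_V0 by (auto simp: QP.Q_carrier)

lemma K_module: "module R KK"
proof (rule module_restrict[OF F_module])
  show "clsP ` LL R P a \<subseteq> carrier FF" using LL_V0 by (auto simp: QP.Q_carrier)
  show "\<zero>\<^bsub>FF\<^esub> \<in> clsP ` LL R P a" using LL_zero by (simp add: QP.Q_zero)
  fix x y assume "x \<in> clsP ` LL R P a" "y \<in> clsP ` LL R P a"
  then obtain u v where uv: "u \<in> LL R P a" "v \<in> LL R P a" "x = clsP u" "y = clsP v" by auto
  then have "x \<oplus>\<^bsub>FF\<^esub> y = clsP (u \<oplus>\<^bsub>V0 R\<^esub> v)" using LL_V0 by (simp add: QP.Q_add subsetD)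
  then show "x \<oplus>\<^bsub>FF\<^esub> y \<in> clsP ` LL R P a"
    using uv QL.W_add by auto
next
  fix r x assume r: "r \<in> carrier R" and "x \<in> clsP ` LL R P a"
  then obtain u where u: "u \<in> LL R P a" "x = clsP u" by auto
  then have "r \<odot>\<^bsub>FF\<^esub> x = clsP (r \<odot>\<^bsub>V0 R\<^esub> u)" using LL_V0 r by (simp add: QP.Q_smult subsetD)
  then show "r \<odot>\<^bsub>FF\<^esub> x \<in> clsP ` LL R P a"
    using u QL.W_smult r by auto
qed

lemma gg_cls: assumes x: "x \<in> carrier (V0 R)" shows "gg (clsP x) = clsL x"
proof -
  have "qrep (V0 R) (PN R P) (clsP x) \<ominus>\<^bsub>V0 R\<^esub> x \<in> LL R P a"
    using QP.qrep(2)[OF x] PN_LL by auto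
  then show ?thesis unfolding gg_def using QL.qcls_eq QP.qrep(1)[OF x] x by simp
qed

lemma gg_lin: "mod_lin R FF CC gg"
  unfolding mod_lin_def
proof (intro conjI ballI)
  show "gg \<in> carrier FF \<rightarrow> carrier CC" by (auto simp: QP.Q_carrier QL.Q_carrier gg_cls)
next
  fix X Y assume "X \<in> carrier FF" "Y \<in> carrier FF"
  then obtain x y where "x \<in> carrier (V0 R)" "y \<in> carrier (V0 R)" "X = clsP x" "Y = clsP y"
    by (auto simp: QP.Q_carrier)
  then show "gg (X \<oplus>\<^bsub>FF\<^esub> Y) = gg X \<oplus>\<^bsub>CC\<^esub> gg Y"
    by (simp add: QP.Q_add QL.Q_add gg_cls)
next
  fix r X assume r: "r \<in> carrier R" and "X \<in> carrier FF"
  then obtain x where "x \<in> carrier (V0 R)" "X = clsP x" by (auto simp: QP.Q_carrier)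
  then show "gg (r \<odot>\<^bsub>FF\<^esub> X) = r \<odot>\<^bsub>CC\<^esub> gg X"
    using r by (simp add: QP.Q_smult QL.Q_smult gg_cls)
qed

lemma gg_onto: "gg ` carrier FF = carrier CC"
  by (auto simp: QP.Q_carrier QL.Q_carrier gg_cls image_iff)

lemma id_lin: "mod_lin R KK FF id"
  using K_sub by (auto simp: mod_lin_def)

lemma V0_minus_zero: "x \<in> carrier (V0 R) \<Longrightarrow> x \<ominus>\<^bsub>V0 R\<^esub> \<zero>\<^bsub>V0 R\<^esub> = x"
  by (simp add: a_minus_def)

lemma gg_ker: "{b \<in> carrier FF. gg b = \<zero>\<^bsub>CC\<^esub>} = id ` carrier KK"
proof
  show "{b \<in> carrier FF. gg b = \<zero>\<^bsub>CC\<^esub>} \<subseteq> id ` carrier KK"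
  proof
    fix X assume "X \<in> {b \<in> carrier FF. gg b = \<zero>\<^bsub>CC\<^esub>}"
    then obtain x where x: "x \<in> carrier (V0 R)" "X = clsP x" "clsL x = clsL \<zero>\<^bsub>V0 R\<^esub>"
      by (auto simp: QP.Q_carrier QL.Q_zero gg_cls)
    then have "x \<in> LL R P a" using QL.qcls_eq[OF x(1)] V0_minus_zero by simp
    then show "X \<in> id ` carrier KK" using x by auto
  qed
next
  show "id ` carrier KK \<subseteq> {b \<in> carrier FF. gg b = \<zero>\<^bsub>CC\<^esub>}"
  proof
    fix X assume "X \<in> id ` carrier KK"
    then obtain x where x: "x \<in> LL R P a" "X = clsP x" by auto
    have xc: "x \<in> carrier (V0 R)" using x LL_V0 by auto
    have "clsL x = clsL \<zero>\<^bsub>V0 R\<^esub>" using QL.qcls_eq[OF xc] V0_minus_zero[OF xc] x by simp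
    then show "X \<in> {b \<in> carrier FF. gg b = \<zero>\<^bsub>CC\<^esub>}"
      using x xc by (auto simp: QP.Q_carrier QL.Q_zero gg_cls)
  qed
qed

end

context pctx begin

lemma ee_c: "ee R N i \<in> carrier R" by (simp add: ee_def)

lemma rho_c: assumes x: "x \<in> carrier (V0 R)" shows "rho R a N x \<in> carrier (V0 R)"
proof -
  have xi: "\<And>i. x i \<in> carrier R" using x by (simp add: V0c)
  have e: "ev R a N x \<in> carrier R" using xi a by (simp add: ev_closed)
  have sub: "{i. rho R a N x i \<noteq> \<zero>} \<subseteq> {..N}" using e by (auto simp: rho_def ee_def)
  have fin: "finite {i. rho R a N x i \<noteq> \<zero>}" by (rule finite_subset[OF sub]) simp
  have "rho R a N x i \<in> carrier R" for i using xi e by (simp add: rho_def ee_c)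
  then show ?thesis using fin by (simp add: V0_carrier)
qed

lemma rho_bnd: assumes x: "x \<in> carrier (V0 R)" shows "bnd R N (rho R a N x)"
  using x a by (auto simp: bnd_def rho_def ee_def V0c ev_closed)

lemma ev_ee: "ev R a N (ee R N) = \<one>"
proof -
  have "ev R a N (ee R N) = (\<Oplus>i\<in>{..N}. if i = N then \<one> else \<zero>)"
    unfolding ev_def by (rule finsum_cong') (use a in \<open>auto simp: ee_def\<close>)
  also have "\<dots> = \<one>" by (simp add: add.finprod_singleton_swap)
  finally show ?thesis .
qed

lemma rho_ev: assumes x: "x \<in> carrier (V0 R)" shows "ev R a N (rho R a N x) = \<zero>"
proof -
  have xi: "\<And>i. x i \<in> carrier R" using x by (simp add: V0c)
  have e: "ev R a N x \<in> carrier R" using xi a by (simp add: ev_closed)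
  have t: "\<And>i. (if i \<le> N then x i else \<zero>) \<in> carrier R" using xi by simp
  have "ev R a N (rho R a N x) = ev R a N (\<lambda>i. if i \<le> N then x i else \<zero>) \<oplus> (\<ominus> ev R a N x) \<otimes> ev R a N (ee R N)"
    unfolding rho_def using t e a by (simp add: ev_add ev_smult ee_c)
  also have "ev R a N (\<lambda>i. if i \<le> N then x i else \<zero>) = ev R a N x"
    by (rule ev_cong) (use xi a in auto)
  finally show ?thesis using e by (simp add: ev_ee r_neg)
qed

lemma rho_LL: assumes x: "x \<in> carrier (V0 R)" shows "rho R a N x \<in> LL R P a"
proof -
  have "ev R a N (rho R a N x) \<in> P" using rho_ev[OF x] P_zero by simp
  then show ?thesis using rho_c[OF x] rho_bnd[OF x] unfolding LL_def by blast
qed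

lemma rho_lin: "mod_lin R (V0 R) (V0 R) (rho R a N)"
  unfolding mod_lin_def
proof (intro conjI ballI)
  show "rho R a N \<in> carrier (V0 R) \<rightarrow> carrier (V0 R)" using rho_c by auto
next
  fix x y assume x: "x \<in> carrier (V0 R)" and y: "y \<in> carrier (V0 R)"
  have xi: "\<And>i. x i \<in> carrier R" and yi: "\<And>i. y i \<in> carrier R" using x y by (auto simp: V0c)
  have ex: "ev R a N x \<in> carrier R" and ey: "ev R a N y \<in> carrier R" using xi yi a by (auto simp: ev_closed)
  have exy: "ev R a N (\<lambda>i. x i \<oplus> y i) = ev R a N x \<oplus> ev R a N y" using xi yi a by (simp add: ev_add)
  show "rho R a N (x \<oplus>\<^bsub>V0 R\<^esub> y) = rho R a N x \<oplus>\<^bsub>V0 R\<^esub> rho R a N y"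
    unfolding V0_add rho_def exy
    by (rule ext) (use xi yi ex ey in \<open>auto simp: ee_def a_ac minus_add\<close>)
next
  fix r x assume r: "r \<in> carrier R" and x: "x \<in> carrier (V0 R)"
  have xi: "\<And>i. x i \<in> carrier R" using x by (auto simp: V0c)
  have ex: "ev R a N x \<in> carrier R" using xi a by (auto simp: ev_closed)
  have exy: "ev R a N (\<lambda>i. r \<otimes> x i) = r \<otimes> ev R a N x" using xi r a by (simp add: ev_smult)
  show "rho R a N (r \<odot>\<^bsub>V0 R\<^esub> x) = r \<odot>\<^bsub>V0 R\<^esub> rho R a N x"
    unfolding V0_smult rho_def exy
    by (rule ext) (use xi ex r in \<open>auto simp: ee_def r_minus r_distr\<close>)
qed

lemma rho_PN: assumes x: "x \<in> PN R P" shows "rho R a N x \<in> PN R P"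
proof -
  have xc: "x \<in> carrier (V0 R)" and xp: "\<And>i. x i \<in> P" using x by (auto simp: PN_def)
  have e: "ev R a N x \<in> P" using ev_in_P xp by blast
  have "rho R a N x i \<in> P" for i
    unfolding rho_def
    by (rule P_add) (auto simp: xp P_zero P_neg e ee_c intro!: P_rmult)
  then show ?thesis using rho_c[OF xc] by (auto simp: PN_def)
qed

lemma rho_fix: assumes x: "x \<in> LL R P a" and b: "bnd R N x"
  shows "rho R a N x \<ominus>\<^bsub>V0 R\<^esub> x \<in> PN R P"
proof -
  have xc: "x \<in> carrier (V0 R)" using x LL_V0 by auto
  have xi: "\<And>i. x i \<in> carrier R" using xc by (simp add: V0c)
  have e: "ev R a N x \<in> P" by (rule LL_all[OF x b])
  have ec: "ev R a N x \<in> carrier R" using e P_sub by auto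
  have "(rho R a N x \<ominus>\<^bsub>V0 R\<^esub> x) i \<in> P" for i
  proof -
    have "(rho R a N x \<ominus>\<^bsub>V0 R\<^esub> x) i = rho R a N x i \<ominus> x i"
      by (simp add: V0_minus[OF rho_c[OF xc] xc])
    also have "\<dots> = (\<ominus> ev R a N x) \<otimes> ee R N i"
      using b xi ec unfolding rho_def
      by (auto simp: bnd_def ee_def a_minus_def a_ac r_neg r_neg2)
    also have "\<dots> \<in> P" using e ee_c by (intro P_rmult P_neg) auto
    finally show ?thesis .
  qed
  then show ?thesis using V.minus_closed[OF rho_c[OF xc] xc] by (auto simp: PN_def)
qed

definition "rr N X = clsP (rho R a N (qrep (V0 R) (PN R P) X))"

lemma rr_cls: assumes x: "x \<in> carrier (V0 R)" shows "rr N (clsP x) = clsP (rho R a N x)"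
proof -
  let ?y = "qrep (V0 R) (PN R P) (clsP x)"
  have y: "?y \<in> carrier (V0 R)" "?y \<ominus>\<^bsub>V0 R\<^esub> x \<in> PN R P" using QP.qrep[OF x] by auto
  have "rho R a N ?y \<ominus>\<^bsub>V0 R\<^esub> rho R a N x = rho R a N (?y \<ominus>\<^bsub>V0 R\<^esub> x)"
    using mlin_minus[OF V0_module V0_module rho_lin y(1) x] by simp
  also have "\<dots> \<in> PN R P" by (rule rho_PN[OF y(2)])
  finally show ?thesis unfolding rr_def using QP.qcls_eq rho_c y(1) x by simp
qed

lemma rr_lin: "mod_lin R FF KK (rr N)"
  unfolding mod_lin_def
proof (intro conjI ballI)
  show "rr N \<in> carrier FF \<rightarrow> carrier KK"
    by (auto simp: QP.Q_carrier rr_cls rho_LL)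
next
  fix X Y assume "X \<in> carrier FF" "Y \<in> carrier FF"
  then obtain x y where xy: "x \<in> carrier (V0 R)" "y \<in> carrier (V0 R)" "X = clsP x" "Y = clsP y"
    by (auto simp: QP.Q_carrier)
  have "rho R a N (x \<oplus>\<^bsub>V0 R\<^esub> y) = rho R a N x \<oplus>\<^bsub>V0 R\<^esub> rho R a N y"
    using rho_lin xy by (simp add: mod_lin_def)
  then show "rr N (X \<oplus>\<^bsub>FF\<^esub> Y) = rr N X \<oplus>\<^bsub>KK\<^esub> rr N Y"
    using xy by (simp add: QP.Q_add rr_cls rho_c)
next
  fix r X assume r: "r \<in> carrier R" and "X \<in> carrier FF"
  then obtain x where x: "x \<in> carrier (V0 R)" "X = clsP x" by (auto simp: QP.Q_carrier)
  have "rho R a N (r \<odot>\<^bsub>V0 R\<^esub> x) = r \<odot>\<^bsub>V0 R\<^esub> rho R a N x"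
    using rho_lin x r by (simp add: mod_lin_def)
  then show "rr N (r \<odot>\<^bsub>FF\<^esub> X) = r \<odot>\<^bsub>KK\<^esub> rr N X"
    using x r by (simp add: QP.Q_smult rr_cls rho_c)
qed

lemma local_retr:
  assumes fin: "finite S" and S: "S \<subseteq> carrier KK"
  shows "\<exists>r. mod_lin R FF KK r \<and> (\<forall>X\<in>S. r (id X) = X)"
proof -
  have "\<forall>X\<in>S. \<exists>x. x \<in> LL R P a \<and> X = clsP x" using S by auto
  then obtain y where y: "\<And>X. X \<in> S \<Longrightarrow> y X \<in> LL R P a \<and> X = clsP (y X)" by metis
  have "\<forall>X\<in>S. \<exists>M. bnd R M (y X)" using y LL_V0 V0_bnd by blast
  then obtain Mf where Mf: "\<And>X. X \<in> S \<Longrightarrow> bnd R (Mf X) (y X)" by metis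
  define N where "N = Max (insert 0 (Mf ` S))"
  have bN: "bnd R N (y X)" if "X \<in> S" for X
    using Mf[OF that] fin that by (auto simp: N_def intro: bnd_mono)
  have "rr N X = X" if X: "X \<in> S" for X
  proof -
    have yc: "y X \<in> carrier (V0 R)" using y[OF X] LL_V0 by auto
    have "rr N X = clsP (rho R a N (y X))" using y[OF X] rr_cls[OF yc] by simp
    also have "\<dots> = clsP (y X)"
      using QP.qcls_eq[OF rho_c[OF yc] yc] rho_fix y[OF X] bN[OF X] by simp
    finally show ?thesis using y[OF X] by simp
  qed
  then show ?thesis using rr_lin by auto
qed

end

context pctx begin

lemma ev_minus: "(\<And>i. x i \<in> carrier R) \<Longrightarrow> (\<And>i. y i \<in> carrier R) \<Longrightarrow>
   ev R a M (\<lambda>i. x i \<ominus> y i) = ev R a M x \<ominus> ev R a M y"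
proof -
  assume x: "\<And>i. x i \<in> carrier R" and y: "\<And>i. y i \<in> carrier R"
  have "(\<lambda>i. x i \<ominus> y i) = (\<lambda>i. x i \<oplus> (\<ominus> \<one>) \<otimes> y i)"
    using x y by (simp add: a_minus_def l_minus)
  moreover have "ev R a M (\<lambda>i. x i \<oplus> (\<ominus> \<one>) \<otimes> y i) = ev R a M x \<oplus> ev R a M (\<lambda>i. (\<ominus> \<one>) \<otimes> y i)"
    by (rule ev_add) (use x y a in auto)
  moreover have "ev R a M (\<lambda>i. (\<ominus> \<one>) \<otimes> y i) = (\<ominus> \<one>) \<otimes> ev R a M y"
    by (rule ev_smult) (use y a in auto)
  ultimately show ?thesis using y a by (simp add: ev_closed a_minus_def l_minus)
qed

lemma K_carrier: "carrier KK = clsP ` LL R P a" by simp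

sublocale K: module R KK by (rule K_module)

lemma annK_P: assumes I: "I \<subseteq> P" shows "ann_sub R KK I = carrier KK"
proof -
  have "r \<odot>\<^bsub>KK\<^esub> X = \<zero>\<^bsub>KK\<^esub>" if r: "r \<in> I" and X: "X \<in> carrier KK" for r X
  proof -
    obtain x where x: "x \<in> LL R P a" "X = clsP x" using X by auto
    have xc: "x \<in> carrier (V0 R)" using x LL_V0 by auto
    have rP: "r \<in> P" and rc: "r \<in> carrier R" using r I P_sub by auto
    have "r \<odot>\<^bsub>V0 R\<^esub> x \<in> PN R P"
      using xc rP rc V.smult_closed[OF rc xc] by (auto simp: PN_def V0_smult V0c P_lmult P_rmult)
    then have "clsP (r \<odot>\<^bsub>V0 R\<^esub> x) = clsP \<zero>\<^bsub>V0 R\<^esub>"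
      using QP.qcls_eq[OF V.smult_closed[OF rc xc] V.zero_closed] V0_minus_zero[OF V.smult_closed[OF rc xc]]
      by simp
    then show ?thesis using x xc rc by (simp add: QP.Q_smult QP.Q_zero)
  qed
  then show ?thesis by (auto simp: ann_sub_def)
qed

lemma annK_nP: assumes I: "ideal I R" and nI: "\<not> I \<subseteq> P" shows "ann_sub R KK I = {\<zero>\<^bsub>KK\<^esub>}"
proof
  obtain r where r: "r \<in> I" "r \<notin> P" using nI by auto
  have rc: "r \<in> carrier R" using r(1) ideal.Icarr[OF I] by auto
  show "ann_sub R KK I \<subseteq> {\<zero>\<^bsub>KK\<^esub>}"
  proof
    fix X assume X: "X \<in> ann_sub R KK I"
    then obtain x where x: "x \<in> LL R P a" "X = clsP x" by (auto simp: ann_sub_def)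
    have xc: "x \<in> carrier (V0 R)" using x LL_V0 by auto
    have "r \<odot>\<^bsub>KK\<^esub> X = \<zero>\<^bsub>KK\<^esub>" using X r by (auto simp: ann_sub_def)
    then have "clsP (r \<odot>\<^bsub>V0 R\<^esub> x) = clsP \<zero>\<^bsub>V0 R\<^esub>" using x xc rc by (simp add: QP.Q_smult QP.Q_zero)
    then have "r \<odot>\<^bsub>V0 R\<^esub> x \<in> PN R P"
      using QP.qcls_eq[OF V.smult_closed[OF rc xc] V.zero_closed] V0_minus_zero[OF V.smult_closed[OF rc xc]]
      by simp
    then have "r \<otimes> x i \<in> P" for i by (simp add: PN_def V0_smult)
    then have "x i \<in> P" for i using P_prime[OF rc V0c[OF xc]] r(2) by blast
    then have "x \<in> PN R P" using xc by (simp add: PN_def)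
    then have "clsP x = clsP \<zero>\<^bsub>V0 R\<^esub>" using QP.qcls_eq[OF xc V.zero_closed] V0_minus_zero[OF xc] by simp
    then show "X \<in> {\<zero>\<^bsub>KK\<^esub>}" using x by (simp add: QP.Q_zero)
  qed
  have "\<forall>r\<in>I. r \<odot>\<^bsub>KK\<^esub> \<zero>\<^bsub>KK\<^esub> = \<zero>\<^bsub>KK\<^esub>"
    using K.smult_r_null ideal.Icarr[OF I] by blast
  then show "{\<zero>\<^bsub>KK\<^esub>} \<subseteq> ann_sub R KK I"
    unfolding ann_sub_def using K.zero_closed by blast
qed

lemma K_minus_zero: "x \<in> carrier KK \<Longrightarrow> y \<in> carrier KK \<Longrightarrow> x \<ominus>\<^bsub>KK\<^esub> y = \<zero>\<^bsub>KK\<^esub> \<Longrightarrow> x = y"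
  by (rule K.ag_minus_zero)

lemma K_semi: "semi_compact R KK"
  unfolding semi_compact_def
proof (intro allI impI)
  fix S assume S: "S \<subseteq> {(y, I). y \<in> carrier KK \<and> ideal I R}"
    and fs: "\<forall>F. F \<subseteq> S \<and> finite F \<longrightarrow> (\<exists>x\<in>carrier KK. \<forall>(y, I)\<in>F. x \<ominus>\<^bsub>KK\<^esub> y \<in> ann_sub R KK I)"
  show "\<exists>x\<in>carrier KK. \<forall>(y, I)\<in>S. x \<ominus>\<^bsub>KK\<^esub> y \<in> ann_sub R KK I"
  proof (cases "\<exists>y0 I0. (y0, I0) \<in> S \<and> \<not> I0 \<subseteq> P")
    case True
    then obtain y0 I0 where y0: "(y0, I0) \<in> S" "\<not> I0 \<subseteq> P" by blast
    have y0c: "y0 \<in> carrier KK" and I0: "ideal I0 R" using S y0 by auto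
    have "y0 \<ominus>\<^bsub>KK\<^esub> y \<in> ann_sub R KK I" if yI: "(y, I) \<in> S" for y I
    proof -
      have "{(y0, I0), (y, I)} \<subseteq> S \<and> finite {(y0, I0), (y, I)}" using y0 yI by simp
      from fs[rule_format, OF this] obtain z where
        z0: "z \<in> carrier KK" "\<forall>(y', I')\<in>{(y0, I0), (y, I)}. z \<ominus>\<^bsub>KK\<^esub> y' \<in> ann_sub R KK I'"
        by blast
      then have z: "z \<in> carrier KK" "z \<ominus>\<^bsub>KK\<^esub> y0 \<in> ann_sub R KK I0" "z \<ominus>\<^bsub>KK\<^esub> y \<in> ann_sub R KK I"
        by simp_all
      have "z = y0" using z(2) annK_nP[OF I0 y0(2)] K_minus_zero[OF z(1) y0c] by simp
      then show ?thesis using z(3) by simp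
    qed
    then show ?thesis using y0c by (intro bexI[of _ y0]) auto
  next
    case False
    have "\<zero>\<^bsub>KK\<^esub> \<ominus>\<^bsub>KK\<^esub> y \<in> ann_sub R KK I" if yI: "(y, I) \<in> S" for y I
    proof -
      have "I \<subseteq> P" using False yI by (metis (no_types))
      moreover have "y \<in> carrier KK" using S yI by auto
      ultimately show ?thesis using annK_P K.minus_closed K.zero_closed by simp
    qed
    then show ?thesis using K.zero_closed by (intro bexI[of _ "\<zero>\<^bsub>KK\<^esub>"]) auto
  qed
qed

end

context pctx begin

lemma ee_V0: "ee R n \<in> carrier (V0 R)"
proof -
  have "{i. ee R n i \<noteq> \<zero>} \<subseteq> {n}" by (auto simp: ee_def)
  then have "finite {i. ee R n i \<noteq> \<zero>}" by (rule finite_subset) simp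
  then show ?thesis by (simp add: V0_carrier ee_c)
qed

lemma ee_bnd: "bnd R n (ee R n)" by (simp add: bnd_def ee_def)

lemma alg1: "x \<in> carrier R \<Longrightarrow> y \<in> carrier R \<Longrightarrow> u \<in> carrier R \<Longrightarrow> v \<in> carrier R \<Longrightarrow>
  (x \<oplus> (\<ominus> a) \<otimes> u) \<ominus> (y \<oplus> (\<ominus> a) \<otimes> v) = (x \<ominus> y) \<ominus> a \<otimes> (u \<ominus> v)"
  using a by (simp add: a_minus_def l_minus r_distr r_minus minus_add a_ac)

lemma alg_id6: "x \<in> carrier R \<Longrightarrow> u \<in> carrier R \<Longrightarrow> s \<in> carrier R \<Longrightarrow> x \<ominus> u = (x \<ominus> s) \<oplus> (s \<ominus> u)"
  by (simp add: a_minus_def a_assoc[symmetric]) (simp add: a_assoc l_neg)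

lemma alg2: "x \<in> carrier R \<Longrightarrow> y \<in> carrier R \<Longrightarrow> z \<in> carrier R \<Longrightarrow> p \<in> carrier R \<Longrightarrow>
  (x \<ominus> p \<otimes> y) \<oplus> p \<otimes> (y \<ominus> a \<otimes> z) = x \<ominus> (p \<otimes> a) \<otimes> z"
proof -
  assume c: "x \<in> carrier R" "y \<in> carrier R" "z \<in> carrier R" "p \<in> carrier R"
  have "p \<otimes> (y \<ominus> a \<otimes> z) = p \<otimes> y \<ominus> (p \<otimes> a) \<otimes> z"
    using c a by (simp add: a_minus_def r_distr r_minus m_assoc)
  then show ?thesis using c a alg_id6[of x "(p \<otimes> a) \<otimes> z" "p \<otimes> y"] by simp
qed

lemma no_ext: assumes k: "mod_lin R FF KK k" and kid: "\<And>X. X \<in> carrier KK \<Longrightarrow> k X = X"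
  shows False
proof -
  have kc: "\<And>X. X \<in> carrier FF \<Longrightarrow> k X \<in> carrier KK" using k by (auto simp: mod_lin_def)
  have kadd: "\<And>X Y. X \<in> carrier FF \<Longrightarrow> Y \<in> carrier FF \<Longrightarrow> k (X \<oplus>\<^bsub>FF\<^esub> Y) = k X \<oplus>\<^bsub>KK\<^esub> k Y"
    and ksm: "\<And>r X. r \<in> carrier R \<Longrightarrow> X \<in> carrier FF \<Longrightarrow> k (r \<odot>\<^bsub>FF\<^esub> X) = r \<odot>\<^bsub>KK\<^esub> k X"
    using k by (auto simp: mod_lin_def)
  have EF: "clsP (ee R n) \<in> carrier FF" for n using ee_V0 by (simp add: QP.Q_carrier)
  have "\<forall>n. \<exists>y. y \<in> LL R P a \<and> k (clsP (ee R n)) = clsP y"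
    using kc[OF EF] by auto
  then obtain kt where kt: "\<And>n. kt n \<in> LL R P a" "\<And>n. k (clsP (ee R n)) = clsP (kt n)" by metis
  have ktc: "kt n \<in> carrier (V0 R)" for n using kt LL_V0 by auto
  define Wf where "Wf n i = ee R n i \<ominus> kt n i" for n i
  have Wc: "Wf n i \<in> carrier R" for n i using ktc by (simp add: Wf_def ee_c V0c)
  have ma: "\<ominus> a \<in> carrier R" using a by simp
  have rel1: "Wf n i \<ominus> a \<otimes> Wf (Suc n) i \<in> P" for n i
  proof -
    define d where "d = ee R n \<oplus>\<^bsub>V0 R\<^esub> (\<ominus> a) \<odot>\<^bsub>V0 R\<^esub> ee R (Suc n)"
    have dc: "d \<in> carrier (V0 R)" unfolding d_def using ee_V0 ma by simp
    have bd: "bnd R (Suc n) d" unfolding d_def using ma by (simp add: bnd_def V0_add V0_smult ee_def)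
    have e1: "ev R a (Suc n) (ee R n) = a"
      using ev_shift[OF _ a(1) ee_bnd, of n 1] ev_ee[of n] a by (simp add: ee_c)
    have "ev R a (Suc n) d = ev R a (Suc n) (ee R n) \<oplus> (\<ominus> a) \<otimes> ev R a (Suc n) (ee R (Suc n))"
      unfolding d_def V0_add V0_smult using ma a by (simp add: ev_add ev_smult ee_c)
    also have "\<dots> = \<zero>" using e1 ev_ee a by (simp add: r_neg)
    finally have "ev R a (Suc n) d \<in> P" using P_zero by simp
    then have dL: "d \<in> LL R P a" using dc bd unfolding LL_def by blast
    have cd: "clsP d = clsP (ee R n) \<oplus>\<^bsub>FF\<^esub> (\<ominus> a) \<odot>\<^bsub>FF\<^esub> clsP (ee R (Suc n))"
      unfolding d_def using ee_V0 ma by (simp add: QP.Q_add QP.Q_smult)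
    have "clsP d = k (clsP d)" using dL by (simp add: kid)
    also have "\<dots> = k (clsP (ee R n)) \<oplus>\<^bsub>KK\<^esub> (\<ominus> a) \<odot>\<^bsub>KK\<^esub> k (clsP (ee R (Suc n)))"
      unfolding cd kadd[OF EF module.smult_closed[OF F_module ma EF]] ksm[OF ma EF] ..
    also have "\<dots> = clsP (kt n \<oplus>\<^bsub>V0 R\<^esub> (\<ominus> a) \<odot>\<^bsub>V0 R\<^esub> kt (Suc n))"
      using kt(2) ktc ma by (simp add: QP.Q_add QP.Q_smult)
    finally have "d \<ominus>\<^bsub>V0 R\<^esub> (kt n \<oplus>\<^bsub>V0 R\<^esub> (\<ominus> a) \<odot>\<^bsub>V0 R\<^esub> kt (Suc n)) \<in> PN R P"
      using QP.qcls_eq[OF dc] ktc ma by simp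
    then have "(d \<ominus>\<^bsub>V0 R\<^esub> (kt n \<oplus>\<^bsub>V0 R\<^esub> (\<ominus> a) \<odot>\<^bsub>V0 R\<^esub> kt (Suc n))) i \<in> P"
      by (simp add: PN_def)
    also have "(d \<ominus>\<^bsub>V0 R\<^esub> (kt n \<oplus>\<^bsub>V0 R\<^esub> (\<ominus> a) \<odot>\<^bsub>V0 R\<^esub> kt (Suc n))) i
       = d i \<ominus> (kt n \<oplus>\<^bsub>V0 R\<^esub> (\<ominus> a) \<odot>\<^bsub>V0 R\<^esub> kt (Suc n)) i"
      using ktc ma by (subst V0_minus[OF dc]) simp_all
    also have "\<dots> = (ee R n i \<oplus> (\<ominus> a) \<otimes> ee R (Suc n) i) \<ominus> (kt n i \<oplus> (\<ominus> a) \<otimes> kt (Suc n) i)"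
      by (simp add: d_def V0_add V0_smult)
    also have "\<dots> = Wf n i \<ominus> a \<otimes> Wf (Suc n) i"
      unfolding Wf_def by (rule alg1) (use ktc in \<open>auto simp: ee_c V0c\<close>)
    finally show ?thesis .
  qed
  have rel2: "Wf 0 i \<ominus> a [^] n \<otimes> Wf n i \<in> P" for n i
  proof (induction n)
    case 0 then show ?case using Wc by (simp add: a_minus_def r_neg P_zero)
  next
    case (Suc n)
    have "Wf 0 i \<ominus> a [^] Suc n \<otimes> Wf (Suc n) i =
        (Wf 0 i \<ominus> a [^] n \<otimes> Wf n i) \<oplus> a [^] n \<otimes> (Wf n i \<ominus> a \<otimes> Wf (Suc n) i)"
      using alg2[OF Wc[of 0 i] Wc[of n i] Wc[of "Suc n" i] nat_pow_closed[OF a(1), of n]] a by simp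
    also have "\<dots> \<in> P" using Suc rel1[of n i] a by (intro P_add P_lmult) auto
    finally show ?case .
  qed
  have W0: "(\<lambda>i. Wf 0 i) \<in> carrier (V0 R)"
  proof -
    have "(\<lambda>i. Wf 0 i) = ee R 0 \<ominus>\<^bsub>V0 R\<^esub> kt 0" by (simp add: Wf_def V0_minus ee_V0 ktc)
    then show ?thesis using ee_V0 ktc by simp
  qed
  obtain N0 where N0: "bnd R N0 (\<lambda>i. Wf 0 i)" using V0_bnd[OF W0] by blast
  define m where "m = Suc N0"
  have Wm: "Wf m i \<in> P" if i: "N0 < i" for i
  proof -
    have "Wf 0 i = \<zero>" using N0 i by (simp add: bnd_def)
    then have "\<ominus> (a [^] m \<otimes> Wf m i) \<in> P" using rel2[of i m] a Wc by (simp add: a_minus_def)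
    then have "a [^] m \<otimes> Wf m i \<in> P" using P_neg a Wc by fastforce
    then show ?thesis using pow_cancel Wc by blast
  qed
  define v' where "v' i = (if i \<le> N0 then Wf m i else \<zero>)" for i
  have v'c: "v' i \<in> carrier R" for i using Wc by (simp add: v'_def)
  have v'b: "bnd R N0 v'" by (simp add: bnd_def v'_def)
  have v'V: "v' \<in> carrier (V0 R)"
  proof -
    have "{i. v' i \<noteq> \<zero>} \<subseteq> {..N0}" by (auto simp: v'_def)
    then have "finite {i. v' i \<noteq> \<zero>}" by (rule finite_subset) simp
    then show ?thesis using v'c by (simp add: V0_carrier)
  qed
  define u where "u i = ee R m i \<ominus> v' i" for i
  have uV: "u = ee R m \<ominus>\<^bsub>V0 R\<^esub> v'" by (simp add: u_def V0_minus ee_V0 v'V fun_eq_iff)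
  have uc: "u \<in> carrier (V0 R)" using uV ee_V0 v'V by simp
  define q where "q i = Wf m i \<ominus> v' i" for i
  have qPN: "q \<in> PN R P"
  proof -
    have "q i \<in> P" for i
      using Wm[of i] Wc v'c by (cases "i \<le> N0") (auto simp: q_def v'_def a_minus_def r_neg P_zero)
    moreover have "q = (\<lambda>i. Wf m i) \<ominus>\<^bsub>V0 R\<^esub> v'"
    proof -
      have "(\<lambda>i. Wf m i) = ee R m \<ominus>\<^bsub>V0 R\<^esub> kt m" by (simp add: Wf_def V0_minus ee_V0 ktc)
      then have "(\<lambda>i. Wf m i) \<in> carrier (V0 R)" using ee_V0 ktc by simp
      then show ?thesis by (simp add: q_def V0_minus v'V fun_eq_iff)
    qed
    moreover have "(\<lambda>i. Wf m i) \<in> carrier (V0 R)"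
    proof -
      have "(\<lambda>i. Wf m i) = ee R m \<ominus>\<^bsub>V0 R\<^esub> kt m" by (simp add: Wf_def V0_minus ee_V0 ktc)
      then show ?thesis using ee_V0 ktc by simp
    qed
    ultimately show ?thesis using v'V by (simp add: PN_def)
  qed
  have "u = kt m \<oplus>\<^bsub>V0 R\<^esub> q"
  proof -
    have "u i = kt m i \<oplus> q i" for i
    proof -
      have c: "ee R m i \<in> carrier R" "kt m i \<in> carrier R" "v' i \<in> carrier R"
        using ktc v'c by (auto simp: ee_c V0c)
      have "kt m i \<oplus> ((ee R m i \<ominus> kt m i) \<ominus> v' i) = kt m i \<oplus> (\<ominus> kt m i \<oplus> (ee R m i \<ominus> v' i))"
        using c by (simp add: a_minus_def a_ac)
      also have "\<dots> = ee R m i \<ominus> v' i" using c by (simp add: r_neg2)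
      finally show ?thesis unfolding u_def q_def Wf_def by simp
    qed
    then show ?thesis by (simp add: V0_add fun_eq_iff)
  qed
  then have uL: "u \<in> LL R P a" using QL.W_add[OF kt(1)] qPN PN_LL by auto
  have ub: "bnd R m u" using v'b by (auto simp: bnd_def u_def ee_def v'_def m_def a_minus_def)
  have "ev R a m u \<in> P" by (rule LL_all[OF uL ub])
  moreover have "ev R a m u = \<one> \<ominus> a \<otimes> ev R a N0 v'"
  proof -
    have "ev R a m u = ev R a m (ee R m) \<ominus> ev R a m v'"
      unfolding u_def by (rule ev_minus) (auto simp: ee_c v'c)
    also have "ev R a m v' = a \<otimes> ev R a N0 v'"
      using ev_shift[OF v'c a(1) v'b, of 1] a by (simp add: m_def)
    finally show ?thesis by (simp add: ev_ee)
  qed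
  ultimately have "\<one> \<ominus> a \<otimes> ev R a N0 v' \<in> P" by simp
  then have "\<ominus> (\<one> \<ominus> a \<otimes> ev R a N0 v') \<in> P" by (rule P_neg)
  moreover have "\<ominus> (\<one> \<ominus> a \<otimes> ev R a N0 v') = a \<otimes> ev R a N0 v' \<ominus> \<one>"
    using a v'c by (simp add: ag_id2 ev_closed)
  ultimately show False using nu[of "ev R a N0 v'"] v'c a by (simp add: ev_closed)
qed

end


lemma (in cr) main:
  assumes "\<forall>M :: ('a, (nat \<Rightarrow> 'a) set set) module.
           module R M \<and> semi_compact R M \<longrightarrow> pure_injective R M"
  shows "\<forall>P. primeideal P R \<longrightarrow> maximalideal P R"
proof (intro allI impI)
  fix P assume Pp: "primeideal P R"
  show "maximalideal P R"
  proof (rule ccontr)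
    assume nm: "\<not> maximalideal P R"
    have Pid: "ideal P R" using Pp by (simp add: primeideal_def)
    have Pnc: "carrier R \<noteq> P" using primeideal.I_notcarr[OF Pp] .
    have "\<exists>J. ideal J R \<and> P \<subseteq> J \<and> J \<subseteq> carrier R \<and> J \<noteq> P \<and> J \<noteq> carrier R"
    proof (rule ccontr)
      assume "\<not> (\<exists>J. ideal J R \<and> P \<subseteq> J \<and> J \<subseteq> carrier R \<and> J \<noteq> P \<and> J \<noteq> carrier R)"
      then have "\<And>J. ideal J R \<Longrightarrow> P \<subseteq> J \<Longrightarrow> J \<subseteq> carrier R \<Longrightarrow> J = P \<or> J = carrier R" by blast
      then have "maximalideal P R" by (rule maximalidealI[OF Pid Pnc])
      with nm show False by contradiction
    qed
    then obtain J where J: "ideal J R" "P \<subseteq> J" "J \<subseteq> carrier R" "J \<noteq> P" "J \<noteq> carrier R"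
      by blast
    obtain a where aJ: "a \<in> J" and aP: "a \<notin> P" using J(2,4) by blast
    have ac: "a \<in> carrier R" using aJ J(3) by auto
    have nu: "a \<otimes> d \<ominus> \<one> \<notin> P" if d: "d \<in> carrier R" for d
    proof
      assume "a \<otimes> d \<ominus> \<one> \<in> P"
      then have h1: "a \<otimes> d \<ominus> \<one> \<in> J" using J(2) by auto
      have h2: "a \<otimes> d \<in> J" using ideal.I_r_closed[OF J(1) aJ d] .
      have "a \<otimes> d \<ominus> (a \<otimes> d \<ominus> \<one>) \<in> J"
        using additive_subgroup.a_closed[OF ideal.axioms(1)[OF J(1)] h2
            additive_subgroup.a_inv_closed[OF ideal.axioms(1)[OF J(1)] h1]]
        by (simp add: a_minus_def)
      moreover have "a \<otimes> d \<ominus> (a \<otimes> d \<ominus> \<one>) = \<one>"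
        using ac d by (simp add: a_minus_def minus_add r_neg2)
      ultimately have "\<one> \<in> J" by simp
      then show False using ideal.one_imp_carrier[OF J(1)] J(5) by simp
    qed
    have pc: "pctx R P a" unfolding pctx_def pctx_axioms_def vctx_def
      using is_cring Pp ac aP nu by blast
    interpret pctx R P a by (rule pc)
    have pi: "pure_injective R KK" using assms[rule_format, of KK] K_module K_semi by blast
    have pe: "pure_exact R KK id FF gg CC"
      unfolding pure_exact_def
    proof (intro conjI allI impI ballI)
      show "module R KK" by (rule K_module)
      show "module R FF" by (rule F_module)
      show "module R CC" by (rule C_module)
      show "mod_lin R KK FF id" by (rule id_lin)
      show "mod_lin R FF CC gg" by (rule gg_lin)
      show "inj_on id (carrier KK)" by simp
      show "gg ` carrier FF = carrier CC" by (rule gg_onto)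
      show "{b \<in> carrier FF. gg b = \<zero>\<^bsub>CC\<^esub>} = id ` carrier KK" by (rule gg_ker)
    next
      fix N :: "('a, (nat \<Rightarrow> 'a) set set) module" and c
      assume N: "module R N" and c: "c \<in> formal_sums R KK N" and t: "tmap R KK id c \<in> tensor_rel R FF N"
      show "c \<in> tensor_rel R KK N"
        by (rule tensor_inj[OF K_module F_module N id_lin local_retr c t])
    next
      fix N :: "('a, (nat \<Rightarrow> 'a) set set) module" and c
      assume N: "module R N" and c: "c \<in> formal_sums R FF N" and t: "tmap R FF gg c \<in> tensor_rel R CC N"
      have ker: "b \<in> id ` carrier KK" if "b \<in> carrier FF" "gg b = \<zero>\<^bsub>CC\<^esub>" for b
        using gg_ker that by blast
      show "\<exists>d\<in>formal_sums R KK N. fs_sub R c (tmap R KK id d) \<in> tensor_rel R FF N"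
        by (rule tensor_mid[OF K_module F_module C_module N id_lin gg_lin gg_onto ker c t])
    next
      fix N :: "('a, (nat \<Rightarrow> 'a) set set) module" and c
      assume N: "module R N" and c: "c \<in> formal_sums R CC N"
      have gc: "gg \<in> carrier FF \<rightarrow> carrier CC" using gg_lin by (simp add: mod_lin_def)
      show "\<exists>d\<in>formal_sums R FF N. fs_sub R c (tmap R FF gg d) \<in> tensor_rel R CC N"
        by (rule tensor_surj[OF gc gg_onto c])
    qed
    have idK: "mod_lin R KK KK id" by (simp add: mod_lin_def)
    obtain k where k: "mod_lin R FF KK k" "\<forall>X\<in>carrier KK. k (id X) = id X"
      using pi[unfolded pure_injective_def, rule_format, OF pe idK] by blast
    have "\<And>X. X \<in> carrier KK \<Longrightarrow> k X = X" using k(2) by (metis id_apply)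
    then show False by (rule no_ext[OF k(1)])
  qed
qed

theorem proposition3p2:
  fixes R :: "'a ring"
  assumes "cring R"
    and "\<forall>M :: ('a, (nat \<Rightarrow> 'a) set set) module.
           module R M \<and> semi_compact R M \<longrightarrow> pure_injective R M"
  shows "\<forall>P. primeideal P R \<longrightarrow> maximalideal P R"
proof -
  interpret cr R unfolding cr_def by (rule assms(1))
  show ?thesis by (rule main[OF assms(2)])
qed


end
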